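(* In the cyclic setting below, for all indices $i\neq j$ in $\{0,\dots,s\}$, $$c_{o_i,e_i}(\sigma_i\sigma_j^{-1})=\zeta^{\nu_i}.$$ (Here $\sigma_i\sigma_j^{-1}\in\Gamma$.)
   Context: $\mathbb{K}$ is a complete non-Archimedean valued field, algebraically closed, of characteristic $0$; $p$ is a prime and $\zeta$ a primitive $p$-th root of unity. $\Gamma\subset\mathrm{PGL}(2,\mathbb{K})$ is a Schottky group of rank $g$ with set of ordinary points $\Omega\ni\infty$, and $N(\Gamma)$ its normalizer. For $a,b\in\Omega$, $\Theta_{a,b}(z)=\prod_{\gamma\in\Gamma}\frac{z-\gamma a}{z-\gamma b}$, and $c_{a,b}:\Gamma\to\mathbb{K}^*$ is the homomorphism with $\Theta_{a,b}(\gamma z)=c_{a,b}(\gamma)\Theta_{a,b}(z)$. Cyclic setting: $\sigma_0\in N(\Gamma)$ satisfies $\sigma_0^p=\mathrm{id}$ and $\prod_{k=0}^{p-1}\sigma_0^k\gamma\sigma_0^{-k}\in[\Gamma,\Gamma]$ for all $\gamma\in\Gamma$; $\Gamma_0=\langle\Gamma,\sigma_0\rangle$. There are $\sigma_0,\sigma_1,\dots,\sigma_s\in\Gamma_0$ of order $p$ with $\Gamma_0$ the free product of the $\langle\sigma_i\rangle$, and the elements $\xi_{j,1}=\sigma_j\sigma_0^{-1}$, $\xi_{j,k}=\sigma_0\xi_{j,k-1}\sigma_0^{-1}$ ($j=1,\dots,s$; $k=2,\dots,p-1$) form a free basis of $\Gamma$. Each $\sigma_i=\upsilon_i^{-1}\mathrm{diag}(\zeta^{\nu_i},1)\upsilon_i$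 for some $\upsilon_i\in\mathrm{PGL}(2,\mathbb{K})$ and integer $\nu_i$; its fixed points $o_i=\upsilon_i^{-1}0$, $e_i=\upsilon_i^{-1}\infty$ are assumed to lie in $\Omega$. *)

theory Defs
  imports Complex_Main "HOL-Computational_Algebra.Polynomial"
begin

definition nonarch_abs :: "('k::field \<Rightarrow> real) \<Rightarrow> bool" where
  "nonarch_abs v \<longleftrightarrow>
     (\<forall>x. 0 \<le> v x) \<and> (\<forall>x. v x = 0 \<longleftrightarrow> x = 0) \<and>
     (\<forall>x y. v (x * y) = v x * v y) \<and>
     (\<forall>x y. v (x + y) \<le> max (v x) (v y)) \<and>
     (\<exists>x. v x \<noteq> 0 \<and> v x \<noteq> 1)"

definition complete_wrt :: "('k::field \<Rightarrow> real) \<Rightarrow> bool" where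
  "complete_wrt v \<longleftrightarrow>
     (\<forall>X::nat \<Rightarrow> 'k. (\<forall>e>0. \<exists>N. \<forall>m\<ge>N. \<forall>n\<ge>N. v (X m - X n) < e) \<longrightarrow>
        (\<exists>L. \<forall>e>0. \<exists>N. \<forall>n\<ge>N. v (X n - L) < e))"

definition alg_closed_field :: "'k::field itself \<Rightarrow> bool" where
  "alg_closed_field _ \<longleftrightarrow> (\<forall>q::'k poly. 0 < degree q \<longrightarrow> (\<exists>x. poly q x = 0))"

definition complete_nonarch_acf :: "('k::field_char_0 \<Rightarrow> real) \<Rightarrow> bool" where
  "complete_nonarch_acf v \<longleftrightarrow> nonarch_abs v \<and> complete_wrt v \<and> alg_closed_field TYPE('k)"

text \<open>P^1(K) is 'k option, with None the point at infinity. Elements of PGL(2,K) are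
  represented by the Moebius transformations they induce (the action is faithful);
  the group law is composition, matching the matrix product.\<close>

definition moeb :: "'k::field \<Rightarrow> 'k \<Rightarrow> 'k \<Rightarrow> 'k \<Rightarrow> 'k option \<Rightarrow> 'k option" where
  "moeb a b c d z = (case z of
      None \<Rightarrow> (if c = 0 then None else Some (a / c))
    | Some x \<Rightarrow> (if c * x + d = 0 then None else Some ((a * x + b) / (c * x + d))))"

definition PGL2 :: "('k::field option \<Rightarrow> 'k option) set" where
  "PGL2 = {moeb a b c d | a b c d. a * d - b * c \<noteq> 0}"

inductive_set mgen :: "('a \<Rightarrow> 'a) set \<Rightarrow> ('a \<Rightarrow> 'a) set" for S where
  gen_id: "id \<in> mgen S"
| gen_mul: "f \<in> S \<Longrightarrow> g \<in> mgen S \<Longrightarrow> f \<circ> g \<in> mgen S"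
| gen_inv: "f \<in> S \<Longrightarrow> g \<in> mgen S \<Longrightarrow> inv f \<circ> g \<in> mgen S"

definition commutator_subgroup :: "('a \<Rightarrow> 'a) set \<Rightarrow> ('a \<Rightarrow> 'a) set" where
  "commutator_subgroup G = mgen {a \<circ> b \<circ> inv a \<circ> inv b | a b. a \<in> G \<and> b \<in> G}"

definition normalizer :: "('k::field option \<Rightarrow> 'k option) set \<Rightarrow> ('k option \<Rightarrow> 'k option) set" where
  "normalizer G = {f \<in> PGL2. (\<lambda>g. f \<circ> g \<circ> inv f) ` G = G}"

definition word_eval :: "('i \<Rightarrow> 'a \<Rightarrow> 'a) \<Rightarrow> ('i \<times> bool) list \<Rightarrow> 'a \<Rightarrow> 'a" where
  "word_eval x w = foldr (\<lambda>(i, b) f. (if b then x i else inv (x i)) \<circ> f) w id"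

definition reduced_word :: "('i \<times> bool) list \<Rightarrow> bool" where
  "reduced_word w \<longleftrightarrow>
     (\<forall>n. Suc n < length w \<longrightarrow> \<not> (fst (w ! n) = fst (w ! Suc n) \<and> snd (w ! n) \<noteq> snd (w ! Suc n)))"

definition free_basis :: "('a \<Rightarrow> 'a) set \<Rightarrow> ('i \<Rightarrow> 'a \<Rightarrow> 'a) \<Rightarrow> 'i set \<Rightarrow> bool" where
  "free_basis G x I \<longleftrightarrow> G = mgen (x ` I) \<and>
     (\<forall>w. w \<noteq> [] \<and> fst ` set w \<subseteq> I \<and> reduced_word w \<longrightarrow> word_eval x w \<noteq> id)"

text \<open>G is the free product of the cyclic groups generated by sigma 0, ..., sigma s,
  each of order p (orders are assumed separately): every nonempty reduced word
  sigma_{i1}^{k1} ... sigma_{in}^{kn} (consecutive indices distinct, 0<k<p) is nontrivial.\<close>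
definition free_product_cyclic :: "nat \<Rightarrow> ('a \<Rightarrow> 'a) set \<Rightarrow> (nat \<Rightarrow> 'a \<Rightarrow> 'a) \<Rightarrow> nat \<Rightarrow> bool" where
  "free_product_cyclic p G \<sigma> s \<longleftrightarrow> G = mgen (\<sigma> ` {0..s}) \<and>
     (\<forall>w::(nat \<times> nat) list. w \<noteq> [] \<and> (\<forall>(i, k) \<in> set w. i \<le> s \<and> 0 < k \<and> k < p) \<and>
        (\<forall>n. Suc n < length w \<longrightarrow> fst (w ! n) \<noteq> fst (w ! Suc n)) \<longrightarrow>
        foldr (\<lambda>(i, k) f. (\<sigma> i ^^ k) \<circ> f) w id \<noteq> id)"

definition chord :: "('k::field \<Rightarrow> real) \<Rightarrow> 'k option \<Rightarrow> 'k option \<Rightarrow> real" where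
  "chord v x y = (case (x, y) of
      (Some a, Some b) \<Rightarrow> v (a - b) / (max 1 (v a) * max 1 (v b))
    | (Some a, None) \<Rightarrow> 1 / max 1 (v a)
    | (None, Some b) \<Rightarrow> 1 / max 1 (v b)
    | (None, None) \<Rightarrow> 0)"

definition limit_set :: "('k::field \<Rightarrow> real) \<Rightarrow> ('k option \<Rightarrow> 'k option) set \<Rightarrow> 'k option set" where
  "limit_set v G = {q. \<exists>x g. (\<forall>n. g n \<in> G) \<and> inj g \<and> (\<lambda>n. chord v (g n x) q) \<longlonglongrightarrow> 0}"

definition ordinary :: "('k::field \<Rightarrow> real) \<Rightarrow> ('k option \<Rightarrow> 'k option) set \<Rightarrow> 'k option set" where
  "ordinary v G = UNIV - limit_set v G"

text \<open>Discontinuous (Gerritzen--van der Put): Omega nonempty and every orbit has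
  compact closure (i.e. is relatively sequentially compact in the metric space P^1).\<close>
definition discontinuous_grp :: "('k::field \<Rightarrow> real) \<Rightarrow> ('k option \<Rightarrow> 'k option) set \<Rightarrow> bool" where
  "discontinuous_grp v G \<longleftrightarrow> ordinary v G \<noteq> {} \<and>
     (\<forall>x (g::nat \<Rightarrow> _). (\<forall>n. g n \<in> G) \<longrightarrow>
        (\<exists>r q. strict_mono r \<and> (\<lambda>n. chord v (g (r n) x) q) \<longlonglongrightarrow> 0))"

definition schottky :: "('k::field \<Rightarrow> real) \<Rightarrow> ('k option \<Rightarrow> 'k option) set \<Rightarrow> nat \<Rightarrow> bool" where
  "schottky v G rk \<longleftrightarrow> G \<subseteq> PGL2 \<and> (\<exists>S. finite S \<and> G = mgen S) \<and> discontinuous_grp v G \<and>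
     (\<forall>g\<in>G. \<forall>n>0. g ^^ n = id \<longrightarrow> g = id) \<and>
     (\<exists>x. free_basis G x {..<rk})"

definition theta_fac :: "'k::field \<Rightarrow> 'k option \<Rightarrow> 'k option \<Rightarrow> 'k" where
  "theta_fac z \<alpha> \<beta> = (case \<alpha> of None \<Rightarrow> 1 | Some x \<Rightarrow> z - x) /
                       (case \<beta> of None \<Rightarrow> 1 | Some y \<Rightarrow> z - y)"

text \<open>Unconditional convergence of the product over G (limit along finite subsets).\<close>
definition theta_has :: "('k::field \<Rightarrow> real) \<Rightarrow> ('k option \<Rightarrow> 'k option) set \<Rightarrow>
    'k option \<Rightarrow> 'k option \<Rightarrow> 'k \<Rightarrow> 'k \<Rightarrow> bool" where
  "theta_has v G a b z L \<longleftrightarrow>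
     (\<forall>e>0. \<exists>F0. finite F0 \<and> F0 \<subseteq> G \<and>
        (\<forall>F. finite F \<and> F0 \<subseteq> F \<and> F \<subseteq> G \<longrightarrow> v ((\<Prod>g\<in>F. theta_fac z (g a) (g b)) - L) < e))"

definition Theta :: "('k::field \<Rightarrow> real) \<Rightarrow> ('k option \<Rightarrow> 'k option) set \<Rightarrow>
    'k option \<Rightarrow> 'k option \<Rightarrow> 'k \<Rightarrow> 'k" where
  "Theta v G a b z = (THE L. theta_has v G a b z L)"

definition autfac :: "('k::field \<Rightarrow> real) \<Rightarrow> ('k option \<Rightarrow> 'k option) set \<Rightarrow>
    'k option \<Rightarrow> 'k option \<Rightarrow> ('k option \<Rightarrow> 'k option) \<Rightarrow> 'k" where
  "autfac v G a b g = (THE c. \<forall>z w. Some z \<in> ordinary v G \<and> g (Some z) = Some w \<longrightarrow>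
       Theta v G a b w = c * Theta v G a b z)"

fun xi :: "(nat \<Rightarrow> 'a \<Rightarrow> 'a) \<Rightarrow> nat \<Rightarrow> nat \<Rightarrow> 'a \<Rightarrow> 'a" where
  "xi \<sigma> j 0 = id"
| "xi \<sigma> j (Suc 0) = \<sigma> j \<circ> inv (\<sigma> 0)"
| "xi \<sigma> j (Suc (Suc k)) = \<sigma> 0 \<circ> xi \<sigma> j (Suc k) \<circ> inv (\<sigma> 0)"

end

theory Submission
  imports Defs
begin

locale nav =
  fixes v :: "'k::field_char_0 \<Rightarrow> real"
  assumes na: "nonarch_abs v"
begin

lemma v_nonneg[simp]: "0 \<le> v x" using na unfolding nonarch_abs_def by blast
lemma v_zero_iff[simp]: "v x = 0 \<longleftrightarrow> x = 0" using na unfolding nonarch_abs_def by blast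
lemma v_0[simp]: "v 0 = 0" using v_zero_iff by blast
lemma v_mult: "v (x * y) = v x * v y" using na unfolding nonarch_abs_def by blast
lemma v_add: "v (x + y) \<le> max (v x) (v y)" using na unfolding nonarch_abs_def by blast

lemma v_one[simp]: "v 1 = 1"
proof -
  have "v 1 = v 1 * v 1" using v_mult[of 1 1] by simp
  moreover have "v 1 \<noteq> 0" by simp
  ultimately show ?thesis by (metis mult_cancel_left1)
qed

lemma v_minus_one[simp]: "v (-1) = 1"
proof -
  have "v (-1) * v (-1) = 1" using v_mult[of "-1" "-1"] by simp
  moreover have "0 \<le> v (-1)" by simp
  ultimately show ?thesis
    by (metis abs_of_nonneg abs_one mult_le_cancel_left1 mult_le_cancel_right1 order.eq_iff zero_less_one
        less_le mult_cancel_right1 nle_le real_sqrt_mult_self real_sqrt_one)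
qed

lemma v_uminus[simp]: "v (- x) = v x"
  using v_mult[of "-1" x] by simp

lemma v_diff_comm: "v (x - y) = v (y - x)"
  by (metis minus_diff_eq v_uminus)

lemma v_diff: "v (x - y) \<le> max (v x) (v y)"
  using v_add[of x "-y"] by simp

lemma v_pos[simp]: "0 < v x \<longleftrightarrow> x \<noteq> 0"
  using v_nonneg[of x] v_zero_iff[of x] by linarith

lemma v_inverse: "v (inverse x) = inverse (v x)"
proof (cases "x = 0")
  case True then show ?thesis by simp
next
  case False
  have "v (inverse x) * v x = 1" using v_mult[of "inverse x" x] False by simp
  then show ?thesis by (simp add: field_simps) (metis eq_divide_eq mult.commute v_zero_iff False)
qed

lemma v_divide: "v (x / y) = v x / v y"
  by (simp add: divide_inverse v_mult v_inverse)

lemma v_power: "v (x ^ n) = v x ^ n"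
  by (induction n) (auto simp: v_mult)

lemma v_add_le: "v x \<le> e \<Longrightarrow> v y \<le> e \<Longrightarrow> v (x + y) \<le> e"
  using v_add[of x y] by linarith

lemma v_add_less: "v x < e \<Longrightarrow> v y < e \<Longrightarrow> v (x + y) < e"
  using v_add[of x y] by linarith

lemma v_diff_less: "v x < e \<Longrightarrow> v y < e \<Longrightarrow> v (x - y) < e"
  using v_diff[of x y] by linarith

lemma v_diff_le: "v x \<le> e \<Longrightarrow> v y \<le> e \<Longrightarrow> v (x - y) \<le> e"
  using v_diff[of x y] by linarith

lemma v_tri: "v (x - z) \<le> max (v (x - y)) (v (y - z))"
  using v_add[of "x - y" "y - z"] by simp

lemma v_strict: "v y < v x \<Longrightarrow> v (x + y) = v x"
proof -
  assume a: "v y < v x"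
  have "v (x + y) \<le> v x" using v_add[of x y] a by linarith
  moreover have "v x \<le> max (v (x + y)) (v y)" using v_diff[of "x + y" y] by simp
  ultimately show ?thesis using a by linarith
qed

lemma v_close: "v (x - y) < v y \<Longrightarrow> v x = v y"
  using v_strict[of "x - y" y] by (simp add: add.commute)

lemma v_sum_le: "finite A \<Longrightarrow> (\<And>i. i \<in> A \<Longrightarrow> v (f i) \<le> e) \<Longrightarrow> 0 \<le> e \<Longrightarrow> v (sum f A) \<le> e"
  by (induction A rule: finite_induct) (auto intro: v_add_le)

lemma v_prod: "finite A \<Longrightarrow> v (prod f A) = (\<Prod>i\<in>A. v (f i))"
  by (induction A rule: finite_induct) (auto simp: v_mult)

end


type_synonym 'k mat = "'k \<times> 'k \<times> 'k \<times> 'k"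

fun mo :: "'k::field mat \<Rightarrow> 'k option \<Rightarrow> 'k option" where
  "mo (a, b, c, d) = moeb a b c d"
fun mdet :: "'k::field mat \<Rightarrow> 'k" where
  "mdet (a, b, c, d) = a * d - b * c"
fun mmul :: "'k::field mat \<Rightarrow> 'k mat \<Rightarrow> 'k mat" where
  "mmul (a, b, c, d) (a', b', c', d') = (a*a' + b*c', a*b' + b*d', c*a' + d*c', c*b' + d*d')"
fun madj :: "'k::field mat \<Rightarrow> 'k mat" where
  "madj (a, b, c, d) = (d, -b, -c, a)"
fun app :: "'k::field mat \<Rightarrow> 'k \<times> 'k \<Rightarrow> 'k \<times> 'k" where
  "app (a, b, c, d) (x, y) = (a*x + b*y, c*x + d*y)"
fun wedge :: "'k::field \<times> 'k \<Rightarrow> 'k \<times> 'k \<Rightarrow> 'k" where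
  "wedge (x0, x1) (y0, y1) = x0 * y1 - x1 * y0"
fun smul :: "'k::field \<Rightarrow> 'k \<times> 'k \<Rightarrow> 'k \<times> 'k" where
  "smul l (x, y) = (l * x, l * y)"
fun smat :: "'k::field \<Rightarrow> 'k mat \<Rightarrow> 'k mat" where
  "smat l (a, b, c, d) = (l*a, l*b, l*c, l*d)"

definition hom :: "'k::field option \<Rightarrow> 'k \<times> 'k" where
  "hom y = (case y of None \<Rightarrow> (-1, 0) | Some x \<Rightarrow> (x, 1))"

lemma hom_simps[simp]: "hom None = (-1, 0)" "hom (Some x) = (x, 1)"
  by (auto simp: hom_def)

lemma hom_nz[simp]: "hom y \<noteq> (0, 0)"
  by (cases y) auto

lemma smul_smul[simp]: "smul a (smul b u) = smul (a * b) u"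
  by (cases u) auto

lemma smul_one[simp]: "smul 1 u = u" by (cases u) auto

lemma app_smul: "app M (smul l u) = smul l (app M u)"
  by (cases M; cases u) (auto simp: algebra_simps)

lemma app_mmul: "app (mmul N M) u = app N (app M u)"
  by (cases M; cases N; cases u) (auto simp: algebra_simps)

lemma mmul_assoc: "mmul (mmul A B) C = mmul A (mmul B C)"
  by (cases A; cases B; cases C) (auto simp: algebra_simps)

lemma mdet_mmul: "mdet (mmul N M) = mdet N * mdet M"
  by (cases M; cases N) (auto simp: algebra_simps)

lemma mdet_madj[simp]: "mdet (madj M) = mdet M"
  by (cases M) (auto simp: algebra_simps)

lemma madj_madj[simp]: "madj (madj M) = M"
  by (cases M) auto

lemma app_adj_app: "app (madj M) (app M u) = smul (mdet M) u"
  by (cases M; cases u) (auto simp: algebra_simps)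

lemma app_app_adj: "app M (app (madj M) u) = smul (mdet M) u"
  using app_adj_app[of "madj M" u] by simp

lemma wedge_app: "wedge (app M u) (app M w) = mdet M * wedge u w"
  by (cases M; cases u; cases w) (auto simp: algebra_simps)

lemma wedge_adj: "wedge (app (madj M) u) w = wedge u (app M w)"
  by (cases M; cases u; cases w) (auto simp: algebra_simps)

lemma wedge_smul1[simp]: "wedge (smul l u) w = l * wedge u w"
  by (cases u; cases w) (auto simp: algebra_simps)

lemma wedge_smul2[simp]: "wedge u (smul l w) = l * wedge u w"
  by (cases u; cases w) (auto simp: algebra_simps)

lemma wedge_self[simp]: "wedge u u = 0"
  by (cases u) (auto simp: algebra_simps)

lemma wedge_antisym: "wedge u w = - wedge w u"
  by (cases u; cases w) (auto simp: algebra_simps)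

lemma app_nz: "mdet M \<noteq> 0 \<Longrightarrow> u \<noteq> (0,0) \<Longrightarrow> app M u \<noteq> (0,0)"
proof
  assume "mdet M \<noteq> 0" "u \<noteq> (0,0)" "app M u = (0,0)"
  then have "smul (mdet M) u = (0,0)" using app_adj_app[of M u]
    by (cases M) auto
  with \<open>mdet M \<noteq> 0\<close> \<open>u \<noteq> (0,0)\<close> show False by (cases u) auto
qed

lemma hom_mo: assumes "mdet M \<noteq> 0"
  shows "\<exists>l. l \<noteq> 0 \<and> hom (mo M y) = smul l (app M (hom y))"
proof -
  obtain a b c d where M: "M = (a, b, c, d)" by (cases M) auto
  have det: "a * d - b * c \<noteq> 0" using assms M by simp
  show ?thesis
  proof (cases y)
    case None
    show ?thesis
    proof (cases "c = 0")
      case True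
      then have "a \<noteq> 0" using det by auto
      then show ?thesis using None True M
        by (intro exI[of _ "1 / a"]) (auto simp: moeb_def)
    next
      case False
      then show ?thesis using None M
        by (intro exI[of _ "- 1 / c"]) (auto simp: moeb_def)
    qed
  next
    case (Some x)
    show ?thesis
    proof (cases "c * x + d = 0")
      case True
      then have "d = - c * x" by (simp add: eq_neg_iff_add_eq_0 add.commute)
      then have "a * x + b \<noteq> 0" using det by (auto simp: algebra_simps)
           (metis add.commute add_eq_0_iff mult.commute mult.left_commute mult_minus_right
               distrib_left)
      then show ?thesis using Some True M
        by (intro exI[of _ "- 1 / (a * x + b)"]) (auto simp: moeb_def)
    next
      case False
      then show ?thesis using Some M
        by (intro exI[of _ "1 / (c * x + d)"]) (auto simp: moeb_def)
    qed
  qed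
qed

lemma hom_inj: assumes "hom x = smul l (hom y)" shows "x = y"
proof (cases x; cases y)
  fix a b assume "x = Some a" "y = Some b"
  then show ?thesis using assms by auto
next
  fix a assume "x = Some a" "y = None"
  then show ?thesis using assms by auto
next
  fix b assume "x = None" "y = Some b"
  then show ?thesis using assms by auto
qed auto

lemma hom_inj': assumes "hom x = smul l (hom y)" shows "l = 1"
proof -
  have "x = y" using hom_inj[OF assms] .
  then show ?thesis using assms by (cases y) auto
qed

definition kap :: "'k::field mat \<Rightarrow> 'k option \<Rightarrow> 'k" where
  "kap M y = (SOME l. l \<noteq> 0 \<and> hom (mo M y) = smul l (app M (hom y)))"

lemma kap: assumes "mdet M \<noteq> 0"
  shows "kap M y \<noteq> 0" "hom (mo M y) = smul (kap M y) (app M (hom y))"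
  using someI_ex[OF hom_mo[OF assms, of y]] unfolding kap_def by auto

lemma smul_cancel: "u \<noteq> (0,0) \<Longrightarrow> smul a u = smul b u \<Longrightarrow> a = b"
  by (cases u) auto

lemma mo_comp: assumes "mdet M \<noteq> 0" "mdet N \<noteq> 0"
  shows "mo N \<circ> mo M = mo (mmul N M)"
proof
  fix y
  have dNM: "mdet (mmul N M) \<noteq> 0" using assms by (simp add: mdet_mmul)
  have "hom (mo N (mo M y)) = smul (kap N (mo M y) * kap M y) (app (mmul N M) (hom y))"
    using kap[OF assms(2), of "mo M y"] kap[OF assms(1), of y] by (simp add: app_smul app_mmul)
  also have "\<dots> = smul (kap N (mo M y) * kap M y / kap (mmul N M) y) (hom (mo (mmul N M) y))"
    using kap[OF dNM, of y] by simp
  finally show "(mo N \<circ> mo M) y = mo (mmul N M) y" using hom_inj by auto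
qed

lemma mo_scal: assumes "mdet M \<noteq> 0" "l \<noteq> 0" shows "mo (smat l M) = mo M"
proof
  fix y
  obtain a b c d where M: "M = (a, b, c, d)" by (cases M) auto
  have d2: "mdet (smat l M) \<noteq> 0" using assms M by (auto simp: algebra_simps)
  have "app (smat l M) u = smul l (app M u)" for u using M by (cases u) (auto simp: algebra_simps)
  then have "hom (mo (smat l M) y) = smul (kap (smat l M) y * l / kap M y) (hom (mo M y))"
    using kap[OF d2, of y] kap[OF assms(1), of y] by simp
  then show "mo (smat l M) y = mo M y" using hom_inj by auto
qed

lemma mo_diag: assumes "l \<noteq> 0" shows "mo (l, 0, 0, l) = id"
  using assms by (auto simp: moeb_def fun_eq_iff split: option.splits)

lemma mmul_adj: "mmul (madj M) M = (mdet M, 0, 0, mdet M)"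
  by (cases M) (auto simp: algebra_simps)

lemma mmul_adj2: "mmul M (madj M) = (mdet M, 0, 0, mdet M)"
  by (cases M) (auto simp: algebra_simps)

lemma mo_adj_comp: assumes "mdet M \<noteq> 0" shows "mo (madj M) \<circ> mo M = id" "mo M \<circ> mo (madj M) = id"
proof -
  have "mo (mmul (madj M) M) = id" "mo (mmul M (madj M)) = id"
    unfolding mmul_adj mmul_adj2 using mo_diag[of "mdet M"] assms by auto
  then show "mo (madj M) \<circ> mo M = id" "mo M \<circ> mo (madj M) = id"
    using mo_comp[of M "madj M"] mo_comp[of "madj M" M] assms by auto
qed

lemma mo_bij: assumes "mdet M \<noteq> 0" shows "bij (mo M)"
  using mo_adj_comp[OF assms] by (metis o_bij)

lemma mo_inv: assumes "mdet M \<noteq> 0" shows "inv (mo M) = mo (madj M)"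
  using mo_adj_comp[OF assms] by (metis inv_unique_comp)

lemma PGL2_iff: "f \<in> PGL2 \<longleftrightarrow> (\<exists>M. mdet M \<noteq> 0 \<and> f = mo M)"
  unfolding PGL2_def by force

lemma mo_Some0: "mo (a, b, c, d) (Some 0) = (if d = 0 then None else Some (b / d))"
  by (simp add: moeb_def)


context nav begin

definition vn :: "'k \<times> 'k \<Rightarrow> real" where
  "vn u = max (v (fst u)) (v (snd u))"

fun mn :: "'k mat \<Rightarrow> real" where
  "mn (a, b, c, d) = max (max (v a) (v b)) (max (v c) (v d))"

lemma vn_simp[simp]: "vn (x, y) = max (v x) (v y)" by (simp add: vn_def)

lemma vn_nonneg[simp]: "0 \<le> vn u" by (cases u) (auto simp: le_max_iff_disj)

lemma vn_smul[simp]: "vn (smul l u) = v l * vn u"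
  by (cases u) (auto simp: v_mult max_mult_distrib_left)

lemma vn_pos: "u \<noteq> (0,0) \<Longrightarrow> 0 < vn u"
  by (cases u) (auto simp: less_max_iff_disj)

lemma vn_hom: "1 \<le> vn (hom y)"
  by (cases y) auto

lemma vn_hom_pos: "0 < vn (hom y)" using vn_hom[of y] by linarith

lemma mn_nonneg[simp]: "0 \<le> mn M" by (cases M) (auto simp: le_max_iff_disj)

lemma mn_adj[simp]: "mn (madj M) = mn M"
  by (cases M) (auto simp: max.commute max.left_commute)

lemma v_wedge_le: "v (wedge u w) \<le> vn u * vn w"
proof -
  obtain a b where u: "u = (a, b)" by (cases u)
  obtain c d where w: "w = (c, d)" by (cases w)
  have "v (a * d) \<le> vn u * vn w" "v (b * c) \<le> vn u * vn w"
    using u w by (auto simp: v_mult le_max_iff_disj intro!: mult_mono)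
  then show ?thesis using u w by (auto intro: v_diff_le)
qed

lemma vn_app_le: "vn (app M u) \<le> mn M * vn u"
proof -
  obtain a b c d where M: "M = (a, b, c, d)" by (cases M)
  obtain x y where u: "u = (x, y)" by (cases u)
  have "v (a*x) \<le> mn M * vn u" "v (b*y) \<le> mn M * vn u" "v (c*x) \<le> mn M * vn u" "v (d*y) \<le> mn M * vn u"
    using M u by (auto simp: v_mult le_max_iff_disj intro!: mult_mono)
  then show ?thesis using M u by (auto intro: v_add_le)
qed

lemma chord_hom: "chord v p q = v (wedge (hom p) (hom q)) / (vn (hom p) * vn (hom q))"
  by (cases p; cases q) (auto simp: chord_def max.commute v_diff_comm)

lemma chord_rep:
  assumes "hom p = smul l P" "hom q = smul m Q"
  shows "chord v p q = v (wedge P Q) / (vn P * vn Q)"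
proof -
  have "l \<noteq> 0" "m \<noteq> 0" using assms hom_nz[of p] hom_nz[of q] by (cases P; cases Q; auto)+
  then show ?thesis unfolding chord_hom assms using v_pos
    by (simp add: v_mult)
qed

lemma chord_nonneg[simp]: "0 \<le> chord v p q"
  unfolding chord_hom by simp

lemma chord_sym: "chord v p q = chord v q p"
  unfolding chord_hom by (metis mult.commute v_uminus wedge_antisym)

lemma chord_self[simp]: "chord v p p = 0"
  unfolding chord_hom by simp

lemma wedge_zero_iff: "u \<noteq> (0,0) \<Longrightarrow> w \<noteq> (0,0) \<Longrightarrow> wedge u w = 0 \<longleftrightarrow> (\<exists>l. w = smul l u)"
proof -
  assume nz: "u \<noteq> (0,0)" "w \<noteq> (0,0)"
  obtain a b where u: "u = (a, b)" by (cases u)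
  obtain c d where w: "w = (c, d)" by (cases w)
  show ?thesis
  proof
    assume "wedge u w = 0"
    then have e: "a * d = b * c" using u w by simp
    show "\<exists>l. w = smul l u"
    proof (cases "a = 0")
      case True
      then have "b \<noteq> 0" using nz u by auto
      then show ?thesis using True e u w by (intro exI[of _ "d / b"]) auto
    next
      case False
      then show ?thesis using e u w by (intro exI[of _ "c / a"]) (auto simp: field_simps)
    qed
  qed (use u w in auto)
qed

lemma chord_zero_iff: "chord v p q = 0 \<longleftrightarrow> p = q"
proof
  assume "chord v p q = 0"
  then have "wedge (hom p) (hom q) = 0" unfolding chord_hom using vn_hom_pos[of p] vn_hom_pos[of q]
    by simp
  then obtain l where "hom q = smul l (hom p)" using wedge_zero_iff hom_nz by blast
  then show "p = q" using hom_inj by metis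
qed simp

lemma chord_pos: "p \<noteq> q \<Longrightarrow> 0 < chord v p q"
  using chord_zero_iff[of p q] chord_nonneg[of p q] by linarith

lemma pluecker: "smul (wedge x z) y = (fst (smul (wedge x y) z) + fst (smul (wedge y z) x),
                                        snd (smul (wedge x y) z) + snd (smul (wedge y z) x))"
  by (cases x; cases y; cases z) (auto simp: algebra_simps)

lemma chord_ultra: "chord v x z \<le> max (chord v x y) (chord v y z)"
proof -
  let ?X = "hom x" and ?Y = "hom y" and ?Z = "hom z"
  define A where "A = v (wedge ?X ?Y) * vn ?Z"
  define B where "B = v (wedge ?Y ?Z) * vn ?X"
  have key: "v (wedge ?X ?Z) * vn ?Y \<le> max A B"
  proof -
    obtain y0 y1 where Y: "?Y = (y0, y1)" by (cases ?Y)
    obtain z0 z1 where Z: "?Z = (z0, z1)" by (cases ?Z)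
    obtain x0 x1 where X: "?X = (x0, x1)" by (cases ?X)
    have p: "smul (wedge ?X ?Z) ?Y = (fst (smul (wedge ?X ?Y) ?Z) + fst (smul (wedge ?Y ?Z) ?X),
                                        snd (smul (wedge ?X ?Y) ?Z) + snd (smul (wedge ?Y ?Z) ?X))"
      by (rule pluecker)
    have "v (wedge ?X ?Z * y0) \<le> max A B" "v (wedge ?X ?Z * y1) \<le> max A B"
    proof -
      have e0: "wedge ?X ?Z * y0 = wedge ?X ?Y * z0 + wedge ?Y ?Z * x0"
        using p X Y Z by simp
      have e1: "wedge ?X ?Z * y1 = wedge ?X ?Y * z1 + wedge ?Y ?Z * x1"
        using p X Y Z by simp
      have "v (wedge ?X ?Y * z0) \<le> A" "v (wedge ?X ?Y * z1) \<le> A"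
        unfolding A_def using Z by (auto simp: v_mult intro!: mult_left_mono)
      moreover have "v (wedge ?Y ?Z * x0) \<le> B" "v (wedge ?Y ?Z * x1) \<le> B"
        unfolding B_def using X by (auto simp: v_mult intro!: mult_left_mono)
      ultimately show "v (wedge ?X ?Z * y0) \<le> max A B" "v (wedge ?X ?Z * y1) \<le> max A B"
        unfolding e0 e1 by (auto intro!: v_add_le simp: le_max_iff_disj)
    qed
    then show ?thesis using Y by (simp add: v_mult max_mult_distrib_left)
  qed
  have px: "0 < vn ?X" "0 < vn ?Y" "0 < vn ?Z" using vn_hom_pos by auto
  have "chord v x z = v (wedge ?X ?Z) * vn ?Y / (vn ?X * vn ?Y * vn ?Z)"
    unfolding chord_hom using px by (simp add: field_simps)
  also have "\<dots> \<le> max A B / (vn ?X * vn ?Y * vn ?Z)"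
    using key px by (intro divide_right_mono) auto
  also have "\<dots> = max (chord v x y) (chord v y z)"
    unfolding chord_hom A_def B_def using px
    by (simp add: max_divide_distrib_right field_simps)
  finally show ?thesis .
qed

lemma chord_mo: assumes "mdet M \<noteq> 0"
  shows "chord v (mo M x) (mo M y) =
     v (mdet M) * v (wedge (hom x) (hom y)) / (vn (app M (hom x)) * vn (app M (hom y)))"
  using chord_rep[OF kap(2)[OF assms, of x] kap(2)[OF assms, of y]] by (simp add: wedge_app v_mult)

lemma vn_app_ge: assumes "mdet M \<noteq> 0"
  shows "v (mdet M) * vn u \<le> mn M * vn (app M u)"
proof -
  have "vn (smul (mdet M) u) \<le> mn (madj M) * vn (app M u)"
    unfolding app_adj_app[symmetric] by (rule vn_app_le)
  then show ?thesis by simp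
qed

lemma chord_lip: assumes "mdet M \<noteq> 0"
  shows "chord v (mo M x) (mo M y) \<le> mn M ^ 2 * chord v x y / v (mdet M)"
proof -
  let ?X = "hom x" and ?Y = "hom y"
  have d: "0 < v (mdet M)" using assms by simp
  have mpos: "0 < mn M"
  proof -
    have "0 < vn (app M ?X)" using app_nz[OF assms hom_nz] vn_pos by blast
    then show ?thesis using vn_app_le[of M ?X] vn_hom_pos[of x]
      by (metis mn_nonneg mult_eq_0_iff order_le_less not_le order.strict_trans2)
  qed
  have a1: "v (mdet M) * vn ?X / mn M \<le> vn (app M ?X)"
    using vn_app_ge[OF assms, of ?X] mpos by (simp add: field_simps)
  have a2: "v (mdet M) * vn ?Y / mn M \<le> vn (app M ?Y)"
    using vn_app_ge[OF assms, of ?Y] mpos by (simp add: field_simps)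
  have p: "0 < v (mdet M) * vn ?X / mn M" "0 < v (mdet M) * vn ?Y / mn M"
    using d mpos vn_hom_pos by auto
  have q: "0 < vn (app M ?X)" "0 < vn (app M ?Y)" using app_nz[OF assms hom_nz] vn_pos by blast+
  have "chord v (mo M x) (mo M y) \<le>
      v (mdet M) * v (wedge ?X ?Y) / ((v (mdet M) * vn ?X / mn M) * (v (mdet M) * vn ?Y / mn M))"
    unfolding chord_mo[OF assms]
    using q by (intro divide_left_mono mult_mono a1 a2 mult_pos_pos p) (auto intro: mult_nonneg_nonneg)
  also have "\<dots> = mn M ^ 2 * chord v x y / v (mdet M)"
    unfolding chord_hom using d mpos vn_hom_pos[of x] vn_hom_pos[of y]
    by (simp add: field_simps power2_eq_square)
  finally show ?thesis .
qed

lemma mn_smat: "mn (smat l M) = v l * mn M"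
  by (cases M) (auto simp: v_mult max_mult_distrib_left)

lemma mdet_smat: "mdet (smat l M) = l^2 * mdet M"
  by (cases M) (auto simp: algebra_simps power2_eq_square)

lemma normalize_mat: assumes "mdet M \<noteq> 0"
  shows "\<exists>M'. mdet M' \<noteq> 0 \<and> mo M' = mo M \<and> mn M' = 1"
proof -
  obtain a b c d where M: "M = (a, b, c, d)" by (cases M)
  have "\<exists>e\<in>{a,b,c,d}. v e = mn M \<and> e \<noteq> 0"
  proof -
    have "M \<noteq> (0,0,0,0)" using assms by auto
    then have "0 < mn M" using M by (auto simp: less_max_iff_disj)
    moreover have "\<exists>e\<in>{a,b,c,d}. v e = mn M" using M
      by (auto simp: max_def)
    ultimately show ?thesis by force
  qed
  then obtain e where e: "v e = mn M" "e \<noteq> 0" by blast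
  let ?M' = "smat (inverse e) M"
  have "mdet ?M' \<noteq> 0" using assms e by (simp add: mdet_smat)
  moreover have "mo ?M' = mo M" using mo_scal[OF assms] e by simp
  moreover have "mn ?M' = 1" using e by (simp add: mn_smat v_inverse)
       (metis e v_zero_iff right_inverse mult.commute)
  ultimately show ?thesis by blast
qed

end


lemma mgen_id: "id \<in> mgen S" by (rule mgen.gen_id)

lemma mgen_gen: "f \<in> S \<Longrightarrow> f \<in> mgen S"
  using mgen.gen_mul[of f S id] mgen.gen_id[of S] by (simp only: comp_id)

lemma mgen_comp: assumes "f \<in> mgen S" "g \<in> mgen S" shows "f \<circ> g \<in> mgen S"
  using assms(1)
proof (induction f rule: mgen.induct)
  case gen_id then show ?case using assms(2) by (simp only: id_comp)
next
  case (gen_mul f h) then show ?case by (metis comp_assoc mgen.gen_mul)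
next
  case (gen_inv f h) then show ?case by (metis comp_assoc mgen.gen_inv)
qed

lemma mgen_bij: assumes "\<And>s. s \<in> S \<Longrightarrow> bij s" "f \<in> mgen S" shows "bij f"
  using assms(2)
proof (induction f rule: mgen.induct)
  case gen_id then show ?case by (simp add: id_def[symmetric])
next
  case (gen_mul f h) then show ?case using assms(1) by (intro bij_comp) auto
next
  case (gen_inv f h) then show ?case using assms(1) by (intro bij_comp bij_imp_bij_inv) auto
qed

lemma mgen_inv1: "f \<in> S \<Longrightarrow> inv f \<in> mgen S"
  using mgen.gen_inv[of f S id] mgen.gen_id[of S] by (simp only: comp_id)

lemma mgen_inv: assumes "\<And>s. s \<in> S \<Longrightarrow> bij s" "f \<in> mgen S" shows "inv f \<in> mgen S"
  using assms(2)
proof (induction f rule: mgen.induct)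
  case gen_id then show ?case using mgen_id[of S] by (simp add: id_def)
next
  case (gen_mul f h)
  have "inv (f \<circ> h) = inv h \<circ> inv f" using assms gen_mul mgen_bij[OF assms(1)] by (simp add: o_inv_distrib)
  moreover have "inv f \<in> mgen S" using gen_mul mgen_inv1 by blast
  ultimately show ?case using gen_mul mgen_comp by metis
next
  case (gen_inv f h)
  have bf: "bij f" using assms gen_inv by blast
  have "inv (inv f \<circ> h) = inv h \<circ> f" using gen_inv assms mgen_bij[OF assms(1)] bf
    by (simp add: o_inv_distrib bij_imp_bij_inv inv_inv_eq)
  moreover have "f \<in> mgen S" using gen_inv mgen_gen by blast
  ultimately show ?case using gen_inv mgen_comp by metis
qed

lemma mgen_least: assumes "S \<subseteq> G" "id \<in> G" "\<And>f g. f \<in> G \<Longrightarrow> g \<in> G \<Longrightarrow> f \<circ> g \<in> G"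
  "\<And>f. f \<in> G \<Longrightarrow> inv f \<in> G" shows "mgen S \<subseteq> G"
proof
  fix f assume "f \<in> mgen S" then show "f \<in> G"
  proof (induction f rule: mgen.induct)
    case gen_id then show ?case using assms by (simp add: id_def[symmetric])
  next
    case (gen_mul f h) then show ?case using assms by blast
  next
    case (gen_inv f h) then show ?case using assms by blast
  qed
qed

lemma mgen_mono: assumes "S \<subseteq> T" shows "mgen S \<subseteq> mgen T"
proof
  fix f assume "f \<in> mgen S" then show "f \<in> mgen T"
  proof (induction f rule: mgen.induct)
    case gen_id then show ?case using mgen_id[of T] by (simp add: id_def)
  next
    case (gen_mul f h) then show ?case using assms by (metis subsetD mgen.gen_mul)
  next
    case (gen_inv f h) then show ?case using assms by (metis subsetD mgen.gen_inv)
  qed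
qed

locale setting =
  fixes v :: "'k::field_char_0 \<Rightarrow> real" and p :: nat and \<zeta> :: 'k
    and \<Gamma> :: "('k option \<Rightarrow> 'k option) set" and g s :: nat
    and \<sigma> \<upsilon> :: "nat \<Rightarrow> 'k option \<Rightarrow> 'k option" and \<nu> :: "nat \<Rightarrow> int"
  assumes field: "complete_nonarch_acf v"
    and p_prime: "prime p"
    and zeta_root: "\<zeta> ^ p = 1" and zeta_prim: "\<forall>k. 0 < k \<and> k < p \<longrightarrow> \<zeta> ^ k \<noteq> 1"
    and schottky: "schottky v \<Gamma> g"
    and inf_ord: "None \<in> ordinary v \<Gamma>"
    and sigma0_norm: "\<sigma> 0 \<in> normalizer \<Gamma>"
    and sigma0_p: "\<sigma> 0 ^^ p = id"
    and sigma_in: "\<forall>l\<le>s. \<sigma> l \<in> mgen (\<Gamma> \<union> {\<sigma> 0}) \<and> \<sigma> l ^^ p = id \<and> \<sigma> l \<noteq> id"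
    and free_prod: "free_product_cyclic p (mgen (\<Gamma> \<union> {\<sigma> 0})) \<sigma> s"
    and xi_basis: "free_basis \<Gamma> (\<lambda>(l, k). xi \<sigma> l k) ({1..s} \<times> {1..p - 1})"
    and sigma_diag: "\<forall>l\<le>s. \<upsilon> l \<in> PGL2 \<and> \<sigma> l = inv (\<upsilon> l) \<circ> moeb (\<zeta> powi \<nu> l) 0 0 1 \<circ> \<upsilon> l"
    and fixpts_ord: "\<forall>l\<le>s. inv (\<upsilon> l) (Some 0) \<in> ordinary v \<Gamma> \<and> inv (\<upsilon> l) None \<in> ordinary v \<Gamma>"
begin

sublocale nav v using field unfolding complete_nonarch_acf_def by unfold_locales blast

abbreviation "\<Omega> \<equiv> ordinary v \<Gamma>"

lemma p_ge2: "2 \<le> p" using p_prime prime_ge_2_nat by blast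

lemma zeta_nz: "\<zeta> \<noteq> 0" using zeta_root p_ge2 by (cases p) auto

lemma Gamma_PGL: "\<Gamma> \<subseteq> PGL2" using schottky unfolding schottky_def by blast

lemma Gamma_mo: "\<gamma> \<in> \<Gamma> \<Longrightarrow> \<exists>M. mdet M \<noteq> 0 \<and> \<gamma> = mo M"
  using Gamma_PGL PGL2_iff by blast

lemma Gamma_mo_norm: "\<gamma> \<in> \<Gamma> \<Longrightarrow> \<exists>M. mdet M \<noteq> 0 \<and> \<gamma> = mo M \<and> mn M = 1"
  using Gamma_mo normalize_mat by metis

lemma Gamma_bij: "\<gamma> \<in> \<Gamma> \<Longrightarrow> bij \<gamma>"
  using Gamma_mo mo_bij by blast

lemma Gamma_gen: "\<exists>S. \<Gamma> = mgen S \<and> (\<forall>s\<in>S. bij s)"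
proof -
  obtain S where S: "\<Gamma> = mgen S" using schottky unfolding schottky_def by blast
  then have "S \<subseteq> \<Gamma>" using mgen_gen by blast
  then show ?thesis using S Gamma_bij by blast
qed

lemma Gamma_id[simp]: "id \<in> \<Gamma>" using Gamma_gen mgen.gen_id by metis

lemma Gamma_comp: "f \<in> \<Gamma> \<Longrightarrow> h \<in> \<Gamma> \<Longrightarrow> f \<circ> h \<in> \<Gamma>"
  using Gamma_gen mgen_comp by metis

lemma Gamma_inv: "f \<in> \<Gamma> \<Longrightarrow> inv f \<in> \<Gamma>"
  using Gamma_gen mgen_inv by metis

lemma Gamma_pow: "f \<in> \<Gamma> \<Longrightarrow> f ^^ n \<in> \<Gamma>"
  by (induction n) (auto intro: Gamma_comp)

lemma torsion: "f \<in> \<Gamma> \<Longrightarrow> 0 < n \<Longrightarrow> f ^^ n = id \<Longrightarrow> f = id"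
  using schottky unfolding schottky_def by blast

lemma inv_comp_self: "bij f \<Longrightarrow> inv f \<circ> f = id" by (simp add: bij_is_inj)
lemma comp_inv_self: "bij f \<Longrightarrow> f \<circ> inv f = id" by (meson bij_is_surj surj_iff)

lemma pow_inj: assumes "f \<in> \<Gamma>" "f \<noteq> id" shows "inj (\<lambda>n. f ^^ n)"
proof (rule injI)
  fix m n assume e: "f ^^ m = f ^^ n"
  have bf: "bij f" using assms Gamma_bij by blast
  have bp: "bij (f ^^ k)" for k using bf by (induction k) (auto intro: bij_comp)
  show "m = n"
  proof (rule ccontr)
    assume "m \<noteq> n"
    then consider "m < n" | "n < m" by linarith
    then show False
    proof cases
      case 1
      then have "f ^^ n = f ^^ (n - m) \<circ> f ^^ m" by (metis funpow_add le_add_diff_inverse2 less_imp_le)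
      then have "f ^^ (n - m) \<circ> f ^^ m = id \<circ> f ^^ m" using e by simp
      then have "f ^^ (n - m) = id" using bp[of m]
        by (metis bij_is_surj comp_assoc comp_inv_self id_comp comp_id)
      then show False using torsion assms 1 by (metis zero_less_diff)
    next
      case 2
      then have "f ^^ m = f ^^ (m - n) \<circ> f ^^ n" by (metis funpow_add le_add_diff_inverse2 less_imp_le)
      then have "f ^^ (m - n) \<circ> f ^^ n = id \<circ> f ^^ n" using e by simp
      then have "f ^^ (m - n) = id" using bp[of n]
        by (metis bij_is_surj comp_assoc comp_inv_self id_comp comp_id)
      then show False using torsion assms 2 by (metis zero_less_diff)
    qed
  qed
qed

end


context setting begin

lemma bij_inv_f_f[simp]: "bij f \<Longrightarrow> inv f (f x) = x" by (simp add: bij_is_inj)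
lemma bij_f_inv_f[simp]: "bij f \<Longrightarrow> f (inv f x) = x" by (simp add: bij_is_surj surj_f_inv_f)

definition Aof :: "nat \<Rightarrow> 'k mat" where
  "Aof l = (SOME A. mdet A \<noteq> 0 \<and> \<upsilon> l = mo A)"
definition dg :: "nat \<Rightarrow> 'k mat" where
  "dg l = (\<zeta> powi \<nu> l, 0, 0, 1)"
definition Sm :: "nat \<Rightarrow> 'k mat" where
  "Sm l = mmul (madj (Aof l)) (mmul (dg l) (Aof l))"
definition ofix :: "nat \<Rightarrow> 'k option" where "ofix l = inv (\<upsilon> l) (Some 0)"
definition efix :: "nat \<Rightarrow> 'k option" where "efix l = inv (\<upsilon> l) None"

lemma Aof: "l \<le> s \<Longrightarrow> mdet (Aof l) \<noteq> 0 \<and> \<upsilon> l = mo (Aof l)"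
  unfolding Aof_def by (rule someI_ex) (use sigma_diag PGL2_iff in blast)

lemma zpow_nz: "\<zeta> powi n \<noteq> 0" using zeta_nz by simp

lemma dg_det: "mdet (dg l) \<noteq> 0" unfolding dg_def using zpow_nz by simp

lemma Sm_det: "l \<le> s \<Longrightarrow> mdet (Sm l) \<noteq> 0"
  unfolding Sm_def using Aof dg_det by (simp add: mdet_mmul)

lemma sigma_mo: assumes "l \<le> s" shows "\<sigma> l = mo (Sm l)"
proof -
  have A: "mdet (Aof l) \<noteq> 0" "\<upsilon> l = mo (Aof l)" using Aof assms by auto
  have "\<sigma> l = mo (madj (Aof l)) \<circ> mo (dg l) \<circ> mo (Aof l)"
    using sigma_diag assms A mo_inv[OF A(1)] by (simp add: dg_def)
  also have "\<dots> = mo (Sm l)" unfolding Sm_def using A dg_det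
    by (simp add: o_assoc[symmetric] mo_comp mdet_mmul mmul_assoc)
  finally show ?thesis .
qed

lemma sigma_bij: "l \<le> s \<Longrightarrow> bij (\<sigma> l)"
  using sigma_mo Sm_det mo_bij by metis

lemma ups_bij: "l \<le> s \<Longrightarrow> bij (\<upsilon> l)"
  using Aof mo_bij by metis

lemma zpow_ne1: assumes "l \<le> s" shows "\<zeta> powi \<nu> l \<noteq> 1"
proof
  assume "\<zeta> powi \<nu> l = 1"
  then have "moeb (\<zeta> powi \<nu> l) 0 0 1 = id" by (auto simp: moeb_def fun_eq_iff split: option.splits)
  then have "\<sigma> l = id" using sigma_diag assms ups_bij[OF assms] by (simp add: fun_eq_iff)
  then show False using sigma_in assms by blast
qed

lemma sigma_ups: "l \<le> s \<Longrightarrow> \<sigma> l y = inv (\<upsilon> l) (moeb (\<zeta> powi \<nu> l) 0 0 1 (\<upsilon> l y))"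
  using sigma_diag by auto

lemma ups_inv: "l \<le> s \<Longrightarrow> \<upsilon> l (inv (\<upsilon> l) y) = y"
  using ups_bij by (meson bij_inv_eq_iff)

lemma inv_ups: "l \<le> s \<Longrightarrow> inv (\<upsilon> l) (\<upsilon> l y) = y"
  using ups_bij by (simp add: bij_is_inj)

lemma fix_o: "l \<le> s \<Longrightarrow> \<sigma> l (ofix l) = ofix l"
  unfolding ofix_def by (simp add: sigma_ups ups_inv moeb_def)

lemma fix_e: "l \<le> s \<Longrightarrow> \<sigma> l (efix l) = efix l"
  unfolding efix_def by (simp add: sigma_ups ups_inv moeb_def)

lemma o_ne_e: "l \<le> s \<Longrightarrow> ofix l \<noteq> efix l"
  unfolding ofix_def efix_def by (metis option.distinct(1) ups_inv)

lemma fix_only: assumes "l \<le> s" "\<sigma> l y = y" shows "y = ofix l \<or> y = efix l"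
proof -
  have "moeb (\<zeta> powi \<nu> l) 0 0 1 (\<upsilon> l y) = \<upsilon> l y"
    using assms sigma_ups[OF assms(1), of y] by (metis ups_inv)
  then have "\<upsilon> l y = Some 0 \<or> \<upsilon> l y = None"
    using zpow_ne1[OF assms(1)]
    by (cases "\<upsilon> l y") (auto simp: moeb_def split: if_splits)
  then show ?thesis unfolding ofix_def efix_def using inv_ups[OF assms(1)] by metis
qed

lemma app_Sm: "app (Sm l) (app (madj (Aof l)) u) = smul (mdet (Aof l)) (app (madj (Aof l)) (app (dg l) u))"
  by (simp add: Sm_def app_mmul app_app_adj app_smul)

lemma kap_ratio: assumes "l \<le> s"
  shows "kap (Sm l) (ofix l) / kap (Sm l) (efix l) = \<zeta> powi \<nu> l"
proof -
  let ?A = "Aof l" and ?z = "\<zeta> powi \<nu> l"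
  have A: "mdet ?A \<noteq> 0" "\<upsilon> l = mo ?A" using Aof assms by auto
  have dA: "mdet (madj ?A) \<noteq> 0" using A by simp
  have io: "inv (\<upsilon> l) = mo (madj ?A)" using A mo_inv by simp
  have S: "mdet (Sm l) \<noteq> 0" using Sm_det assms by blast
  obtain mu where mu: "hom (ofix l) = smul mu (app (madj ?A) (0, 1))"
    using kap(2)[OF dA, of "Some 0"] unfolding ofix_def io by auto
  obtain mu' where mu': "hom (efix l) = smul mu' (app (madj ?A) (-1, 0))"
    using kap(2)[OF dA, of "None"] unfolding efix_def io by auto
  have "app (Sm l) (hom (ofix l)) = smul (mdet ?A) (hom (ofix l))"
    unfolding mu by (simp add: app_smul app_Sm dg_def mult.commute)
  then have "hom (ofix l) = smul (kap (Sm l) (ofix l) * mdet ?A) (hom (ofix l))"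
    using kap(2)[OF S, of "ofix l"] sigma_mo[OF assms] fix_o[OF assms] by simp
  then have k1: "kap (Sm l) (ofix l) * mdet ?A = 1"
    using hom_inj' by blast
  have e: "app (dg l) (-1, 0) = smul ?z (-1, 0)" by (simp add: dg_def)
  have "app (Sm l) (hom (efix l)) = smul (mu' * (mdet ?A * ?z)) (app (madj ?A) (-1, 0))"
    unfolding mu' app_smul app_Sm e by (simp only: app_smul smul_smul)
  also have "\<dots> = smul (?z * mdet ?A) (hom (efix l))" unfolding mu' by (simp add: ac_simps)
  finally have "app (Sm l) (hom (efix l)) = smul (?z * mdet ?A) (hom (efix l))" .
  then have "hom (efix l) = smul (kap (Sm l) (efix l) * (?z * mdet ?A)) (hom (efix l))"
    using kap(2)[OF S, of "efix l"] sigma_mo[OF assms] fix_e[OF assms] by simp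
  then have k2: "kap (Sm l) (efix l) * (?z * mdet ?A) = 1"
    using hom_inj' by blast
  have "?z \<noteq> 0" by (rule zpow_nz)
  have o1: "kap (Sm l) (ofix l) = 1 / mdet ?A" using k1 A(1) by (simp add: field_simps)
  have e1: "kap (Sm l) (efix l) = 1 / (?z * mdet ?A)" using k2 A(1) \<open>?z \<noteq> 0\<close>
    by (simp add: field_simps)
  show ?thesis unfolding o1 e1 using A(1) \<open>?z \<noteq> 0\<close> by simp
qed

lemma norm_img: "(\<lambda>g. \<sigma> 0 \<circ> g \<circ> inv (\<sigma> 0)) ` \<Gamma> = \<Gamma>"
  using sigma0_norm unfolding normalizer_def by (simp only: mem_Collect_eq)

lemma sigma_norm0: assumes "\<gamma> \<in> \<Gamma>" shows "\<sigma> 0 \<circ> \<gamma> \<circ> inv (\<sigma> 0) \<in> \<Gamma>"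
proof -
  have "\<sigma> 0 \<circ> \<gamma> \<circ> inv (\<sigma> 0) \<in> (\<lambda>g. \<sigma> 0 \<circ> g \<circ> inv (\<sigma> 0)) ` \<Gamma>"
    using assms by (rule imageI)
  then show ?thesis by (simp only: norm_img)
qed

lemma sigma_norm0': assumes "\<gamma> \<in> \<Gamma>" shows "inv (\<sigma> 0) \<circ> \<gamma> \<circ> \<sigma> 0 \<in> \<Gamma>"
proof -
  have "\<gamma> \<in> (\<lambda>g. \<sigma> 0 \<circ> g \<circ> inv (\<sigma> 0)) ` \<Gamma>" using assms by (simp only: norm_img)
  then obtain g' where g': "g' \<in> \<Gamma>" "\<gamma> = \<sigma> 0 \<circ> g' \<circ> inv (\<sigma> 0)" by blast
  have b: "bij (\<sigma> 0)" using sigma_bij by blast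
  have "inv (\<sigma> 0) \<circ> \<gamma> \<circ> \<sigma> 0 = g'" unfolding g'(2) using b
    by (simp add: fun_eq_iff)
  then show ?thesis using g' by simp
qed

lemma xi_in: assumes "l \<le> s" shows "\<sigma> l \<circ> inv (\<sigma> 0) \<in> \<Gamma>"
proof (cases "l = 0")
  case True then show ?thesis using sigma_bij[of 0] by (simp add: comp_inv_self)
next
  case False
  have "\<Gamma> = mgen ((\<lambda>(l, k). xi \<sigma> l k) ` ({1..s} \<times> {1..p - 1}))" using xi_basis
    unfolding free_basis_def by blast
  moreover have "(l, 1) \<in> {1..s} \<times> {1..p - 1}" using False assms p_ge2 by auto
  ultimately have "(\<lambda>(l, k). xi \<sigma> l k) (l, 1) \<in> \<Gamma>" by (metis imageI mgen_gen)
  then have "xi \<sigma> l 1 \<in> \<Gamma>" by simp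
  then show ?thesis by simp
qed


lemma sigma_decomp: assumes "l \<le> s" shows "\<sigma> l = (\<sigma> l \<circ> inv (\<sigma> 0)) \<circ> \<sigma> 0"
  using sigma_bij[of 0] by (simp add: fun_eq_iff)

lemma part1: assumes "i \<le> s" "j \<le> s" shows "\<sigma> i \<circ> inv (\<sigma> j) \<in> \<Gamma>"
proof -
  have bi: "bij (\<sigma> i)" "bij (\<sigma> j)" "bij (\<sigma> 0)" using sigma_bij assms by auto
  have "\<sigma> i \<circ> inv (\<sigma> j) = (\<sigma> i \<circ> inv (\<sigma> 0)) \<circ> inv (\<sigma> j \<circ> inv (\<sigma> 0))"
    using bi by (simp add: o_inv_distrib bij_imp_bij_inv inv_inv_eq fun_eq_iff)
  then show ?thesis using xi_in assms Gamma_comp Gamma_inv by metis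
qed

lemma conj_sigma: assumes "l \<le> s" "\<gamma> \<in> \<Gamma>"
  shows "\<sigma> l \<circ> \<gamma> \<circ> inv (\<sigma> l) \<in> \<Gamma>" "inv (\<sigma> l) \<circ> \<gamma> \<circ> \<sigma> l \<in> \<Gamma>"
proof -
  define x where "x = \<sigma> l \<circ> inv (\<sigma> 0)"
  have x: "x \<in> \<Gamma>" using xi_in assms x_def by blast
  have bi: "bij (\<sigma> l)" "bij (\<sigma> 0)" "bij x" using sigma_bij assms x Gamma_bij by auto
  have sl: "\<sigma> l = x \<circ> \<sigma> 0" using sigma_decomp assms x_def by blast
  have "\<sigma> l \<circ> \<gamma> \<circ> inv (\<sigma> l) = x \<circ> (\<sigma> 0 \<circ> \<gamma> \<circ> inv (\<sigma> 0)) \<circ> inv x"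
    unfolding sl using bi by (simp add: o_inv_distrib fun_eq_iff)
  then show "\<sigma> l \<circ> \<gamma> \<circ> inv (\<sigma> l) \<in> \<Gamma>" using sigma_norm0 assms x Gamma_comp Gamma_inv by metis
  have "inv (\<sigma> l) \<circ> \<gamma> \<circ> \<sigma> l = inv (\<sigma> 0) \<circ> (inv x \<circ> \<gamma> \<circ> x) \<circ> \<sigma> 0"
    unfolding sl using bi by (simp add: o_inv_distrib fun_eq_iff)
  then show "inv (\<sigma> l) \<circ> \<gamma> \<circ> \<sigma> l \<in> \<Gamma>" using sigma_norm0' assms x Gamma_comp Gamma_inv by metis
qed

end


lemma lim0_iff: assumes "\<And>n. 0 \<le> (X n :: real)"
  shows "X \<longlonglongrightarrow> 0 \<longleftrightarrow> (\<forall>r>0. \<exists>N. \<forall>n\<ge>N. X n < r)"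
  unfolding LIMSEQ_iff using assms by auto

lemma lim0_sandwich: assumes "\<And>n. 0 \<le> (X n :: real)" "\<And>n. X n \<le> C * Y n" "Y \<longlonglongrightarrow> 0" "0 \<le> C"
  shows "X \<longlonglongrightarrow> 0"
proof -
  have "(\<lambda>n. C * Y n) \<longlonglongrightarrow> 0" using tendsto_mult[OF tendsto_const assms(3), of C] by simp
  then show ?thesis using assms(1,2) by (intro tendsto_sandwich[of "\<lambda>_. 0" X sequentially "\<lambda>n. C * Y n"]) auto
qed

lemma seq_helper:
  assumes "\<forall>\<eta>>0. \<exists>\<gamma>\<in>G. 0 < d \<gamma> \<and> d \<gamma> < (\<eta>::real)"
  shows "\<exists>q. (\<forall>n. q n \<in> G) \<and> inj q \<and> (\<lambda>n. d (q n)) \<longlonglongrightarrow> 0"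
proof -
  define pick where "pick \<eta> = (SOME \<gamma>. \<gamma> \<in> G \<and> 0 < d \<gamma> \<and> d \<gamma> < \<eta>)" for \<eta>
  have pick: "pick \<eta> \<in> G \<and> 0 < d (pick \<eta>) \<and> d (pick \<eta>) < \<eta>" if "0 < \<eta>" for \<eta>
    unfolding pick_def by (rule someI_ex) (use assms that in blast)
  define q where "q = rec_nat (pick 1) (\<lambda>n prev. pick (min (1 / (real n + 2)) (d prev)))"
  have q0: "q 0 = pick 1" and qS: "q (Suc n) = pick (min (1 / (real n + 2)) (d (q n)))" for n
    unfolding q_def by simp_all
  have P: "q n \<in> G \<and> 0 < d (q n) \<and> d (q n) < 1 / (real n + 1)" for n
  proof (induction n)
    case 0 then show ?case using pick[of 1] q0 by simp
  next
    case (Suc n)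
    have m: "0 < min (1 / (real n + 2)) (d (q n))" using Suc by simp
    have "q (Suc n) \<in> G \<and> 0 < d (q (Suc n)) \<and> d (q (Suc n)) < min (1 / (real n + 2)) (d (q n))"
      using pick[OF m] qS[of n] by simp
    then show ?case by (simp add: add.commute)
  qed
  have dec: "d (q (Suc n)) < d (q n)" for n
  proof -
    have "0 < min (1 / (real n + 2)) (d (q n))" using P[of n] by simp
    then show ?thesis using pick qS[of n] by fastforce
  qed
  have sm: "strict_mono (\<lambda>n. - d (q n))" unfolding strict_mono_Suc_iff using dec by simp
  have "inj q"
  proof (rule injI)
    fix m n assume "q m = q n"
    then have "- d (q m) = - d (q n)" by simp
    then show "m = n" using strict_mono_eq[OF sm] by blast
  qed
  moreover have "(\<lambda>n. d (q n)) \<longlonglongrightarrow> 0"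
  proof (rule lim0_sandwich[of _ 1 "\<lambda>n. inverse (real (Suc n))"])
    show "0 \<le> d (q n)" for n using P[of n] by simp
    show "d (q n) \<le> 1 * inverse (real (Suc n))" for n using P[of n] by (simp add: inverse_eq_divide add.commute)
  qed (use LIMSEQ_inverse_real_of_nat in auto)
  ultimately show ?thesis using P by blast
qed

context setting begin

lemma ordD: "x \<in> \<Omega> \<Longrightarrow> (\<forall>n. gs n \<in> \<Gamma>) \<Longrightarrow> inj gs \<Longrightarrow> (\<lambda>n. chord v (gs n y) x) \<longlonglongrightarrow> 0 \<Longrightarrow> False"
  unfolding ordinary_def limit_set_def by blast

lemma ord_inv: assumes "mdet M \<noteq> 0" "\<And>\<gamma>. \<gamma> \<in> \<Gamma> \<Longrightarrow> inv (mo M) \<circ> \<gamma> \<circ> mo M \<in> \<Gamma>" "x \<in> \<Omega>"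
  shows "mo M x \<in> \<Omega>"
proof (rule ccontr)
  assume "mo M x \<notin> \<Omega>"
  then obtain y gs where gs: "\<forall>n. gs n \<in> \<Gamma>" "inj gs" "(\<lambda>n. chord v (gs n y) (mo M x)) \<longlonglongrightarrow> 0"
    unfolding ordinary_def limit_set_def by blast
  let ?h = "mo M" and ?N = "madj M"
  have b: "bij ?h" using mo_bij assms by blast
  have ih: "inv ?h = mo ?N" using mo_inv assms by blast
  define hs where "hs n = inv ?h \<circ> gs n \<circ> ?h" for n
  have "\<forall>n. hs n \<in> \<Gamma>" using gs assms unfolding hs_def by blast
  moreover have "inj hs"
  proof (rule injI)
    fix m n assume "hs m = hs n"
    then have "?h \<circ> hs m \<circ> inv ?h = ?h \<circ> hs n \<circ> inv ?h" by simp
    then have "gs m = gs n" unfolding hs_def using b by (simp add: fun_eq_iff)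
    then show "m = n" using gs(2) by (simp add: inj_eq)
  qed
  moreover have "(\<lambda>n. chord v (hs n (inv ?h y)) x) \<longlonglongrightarrow> 0"
  proof (rule lim0_sandwich[of _ "mn ?N ^ 2 / v (mdet ?N)"])
    show "0 \<le> chord v (hs n (inv ?h y)) x" for n by simp
    show "chord v (hs n (inv ?h y)) x \<le> mn ?N ^ 2 / v (mdet ?N) * chord v (gs n y) (mo M x)" for n
    proof -
      have "chord v (hs n (inv ?h y)) x = chord v (mo ?N (gs n y)) (mo ?N (mo M x))"
        unfolding hs_def ih[symmetric] using b by simp
      also have "\<dots> \<le> mn ?N ^ 2 * chord v (gs n y) (mo M x) / v (mdet ?N)"
        using chord_lip[of ?N] assms by simp
      finally show ?thesis by simp
    qed
  qed (use gs in auto)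
  ultimately show False using ordD[OF assms(3)] by blast
qed

lemma ord_Gamma: assumes "\<gamma> \<in> \<Gamma>" "x \<in> \<Omega>" shows "\<gamma> x \<in> \<Omega>"
proof -
  obtain M where M: "mdet M \<noteq> 0" "\<gamma> = mo M" using Gamma_mo assms by blast
  have "inv (mo M) \<circ> \<delta> \<circ> mo M \<in> \<Gamma>" if "\<delta> \<in> \<Gamma>" for \<delta>
    using that assms M Gamma_comp Gamma_inv by metis
  then show ?thesis using ord_inv[OF M(1) _ assms(2)] M by blast
qed

lemma lemA: assumes "w \<in> \<Omega>" shows "\<exists>\<eta>>0. finite {\<gamma>\<in>\<Gamma>. chord v (\<gamma> x) w < \<eta>}"
proof (rule ccontr)
  assume na: "\<not> ?thesis"
  show False
  proof (cases "finite {\<gamma>\<in>\<Gamma>. \<gamma> x = w}")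
    case False
    then obtain f :: "nat \<Rightarrow> _" where f: "inj f" "range f \<subseteq> {\<gamma>\<in>\<Gamma>. \<gamma> x = w}"
      using infinite_countable_subset by blast
    then have "chord v (f n x) w = 0" for n by (simp add: image_subset_iff)
    then have "(\<lambda>n. chord v (f n x) w) \<longlonglongrightarrow> 0" by simp
    then show False using ordD[OF assms, of f] f by blast
  next
    case True
    have "\<forall>\<eta>>0. \<exists>\<gamma>\<in>\<Gamma>. 0 < chord v (\<gamma> x) w \<and> chord v (\<gamma> x) w < \<eta>"
    proof (intro allI impI)
      fix \<eta> :: real assume "0 < \<eta>"
      then have "infinite {\<gamma>\<in>\<Gamma>. chord v (\<gamma> x) w < \<eta>}" using na by blast
      then have "infinite ({\<gamma>\<in>\<Gamma>. chord v (\<gamma> x) w < \<eta>} - {\<gamma>\<in>\<Gamma>. \<gamma> x = w})" using True by simp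
      then obtain \<gamma> where "\<gamma> \<in> {\<gamma>\<in>\<Gamma>. chord v (\<gamma> x) w < \<eta>} - {\<gamma>\<in>\<Gamma>. \<gamma> x = w}"
        using infinite_imp_nonempty by blast
      then show "\<exists>\<gamma>\<in>\<Gamma>. 0 < chord v (\<gamma> x) w \<and> chord v (\<gamma> x) w < \<eta>" using chord_pos by auto
    qed
    then obtain q where "\<forall>n. q n \<in> \<Gamma>" "inj q" "(\<lambda>n. chord v (q n x) w) \<longlonglongrightarrow> 0"
      using seq_helper[where d = "\<lambda>\<gamma>. chord v (\<gamma> x) w"] by blast
    then show False using ordD[OF assms] by blast
  qed
qed

lemma free_action: assumes "\<delta> \<in> \<Gamma>" "w \<in> \<Omega>" "\<delta> w = w" shows "\<delta> = id"
proof (rule ccontr)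
  assume "\<delta> \<noteq> id"
  then have "inj (\<lambda>n. \<delta> ^^ n)" using pow_inj assms by blast
  moreover have "\<forall>n. \<delta> ^^ n \<in> \<Gamma>" using Gamma_pow assms by blast
  moreover have "(\<delta> ^^ n) w = w" for n using assms(3) by (induction n) auto
  ultimately show False using ordD[OF assms(2), of "\<lambda>n. \<delta> ^^ n" w] by simp
qed

end


context setting begin

definition nm :: "('k option \<Rightarrow> 'k option) \<Rightarrow> 'k mat" where
  "nm \<gamma> = (SOME M. mdet M \<noteq> 0 \<and> \<gamma> = mo M \<and> mn M = 1)"

lemma nm: assumes "\<gamma> \<in> \<Gamma>" shows "mdet (nm \<gamma>) \<noteq> 0" "\<gamma> = mo (nm \<gamma>)" "mn (nm \<gamma>) = 1"
  using someI_ex[OF Gamma_mo_norm[OF assms]] unfolding nm_def by auto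

lemma nm_inv: assumes "\<gamma> \<in> \<Gamma>" shows "inv \<gamma> = mo (madj (nm \<gamma>))"
  using nm[OF assms] mo_inv by metis

lemma adj_col: assumes "mn M = 1"
  shows "vn (app (madj M) (0, 1)) = 1 \<or> vn (app (madj M) (-1, 0)) = 1"
proof -
  obtain a b c d where M: "M = (a, b, c, d)" by (cases M)
  have m: "max (max (v a) (v b)) (max (v c) (v d)) = 1" using assms M by simp
  then have le: "v a \<le> 1" "v b \<le> 1" "v c \<le> 1" "v d \<le> 1" by (metis max.cobounded1 max.cobounded2 order_trans)+
  have "v a = 1 \<or> v b = 1 \<or> v c = 1 \<or> v d = 1" using m unfolding max_def by presburger
  moreover have "vn (app (madj M) (0, 1)) = max (v b) (v a)" "vn (app (madj M) (-1, 0)) = max (v d) (v c)"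
    using M by simp_all
  ultimately show ?thesis using le by (auto simp: max_def)
qed

lemma chord_inv_bound: assumes "\<gamma> \<in> \<Gamma>" "vn Y = 1" "hom y = Y" "vn (app (madj (nm \<gamma>)) Y) = 1"
  shows "chord v (inv \<gamma> y) a \<le> vn (app (nm \<gamma>) (hom a))"
proof -
  let ?M = "nm \<gamma>" let ?N = "madj ?M"
  have dN: "mdet ?N \<noteq> 0" using nm[OF assms(1)] by simp
  have "chord v (inv \<gamma> y) a = v (wedge (app ?N Y) (hom a)) / (vn (app ?N Y) * vn (hom a))"
    unfolding nm_inv[OF assms(1)] using chord_rep[OF kap(2)[OF dN, of y], of a 1 "hom a"] assms(3) by simp
  also have "\<dots> = v (wedge Y (app ?M (hom a))) / vn (hom a)"
    using assms(4) by (simp add: wedge_adj)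
  also have "\<dots> \<le> vn Y * vn (app ?M (hom a)) / vn (hom a)"
    using v_wedge_le vn_hom_pos by (intro divide_right_mono) auto
  also have "\<dots> \<le> vn (app ?M (hom a))"
  proof -
    have "vn (app ?M (hom a)) * 1 \<le> vn (app ?M (hom a)) * vn (hom a)"
      using vn_hom[of a] by (intro mult_left_mono) auto
    then show ?thesis using assms(2) vn_hom_pos[of a] by (simp add: divide_le_eq)
  qed
  finally show ?thesis .
qed

lemma lemB: assumes "a \<in> \<Omega>" shows "\<exists>\<eta>>0. finite {\<gamma>\<in>\<Gamma>. vn (app (nm \<gamma>) (hom a)) < \<eta>}"
proof -
  obtain \<eta>0 where e0: "\<eta>0 > 0" "finite {\<gamma>\<in>\<Gamma>. chord v (\<gamma> (Some 0)) a < \<eta>0}" using lemA assms by blast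
  obtain \<eta>1 where e1: "\<eta>1 > 0" "finite {\<gamma>\<in>\<Gamma>. chord v (\<gamma> None) a < \<eta>1}" using lemA assms by blast
  let ?A = "{\<gamma>\<in>\<Gamma>. chord v (\<gamma> (Some 0)) a < \<eta>0} \<union> {\<gamma>\<in>\<Gamma>. chord v (\<gamma> None) a < \<eta>1}"
  have "{\<gamma>\<in>\<Gamma>. vn (app (nm \<gamma>) (hom a)) < min \<eta>0 \<eta>1} \<subseteq> inv ` ?A"
  proof
    fix \<gamma> assume g: "\<gamma> \<in> {\<gamma>\<in>\<Gamma>. vn (app (nm \<gamma>) (hom a)) < min \<eta>0 \<eta>1}"
    then have gG: "\<gamma> \<in> \<Gamma>" by simp
    have ig: "inv \<gamma> \<in> \<Gamma>" using Gamma_inv gG by blast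
    have "inv \<gamma> \<in> ?A"
    proof (cases "vn (app (madj (nm \<gamma>)) (0, 1)) = 1")
      case True
      have "chord v (inv \<gamma> (Some 0)) a \<le> vn (app (nm \<gamma>) (hom a))"
        using chord_inv_bound[OF gG _ _ True] by simp
      then show ?thesis using g ig by auto
    next
      case False
      then have F: "vn (app (madj (nm \<gamma>)) (-1, 0)) = 1" using adj_col nm[OF gG] by blast
      have "chord v (inv \<gamma> None) a \<le> vn (app (nm \<gamma>) (hom a))"
        using chord_inv_bound[OF gG _ _ F] by simp
      then show ?thesis using g ig by auto
    qed
    moreover have "\<gamma> = inv (inv \<gamma>)" using Gamma_bij gG by (simp add: inv_inv_eq)
    ultimately show "\<gamma> \<in> inv ` ?A" by blast
  qed
  moreover have "finite (inv ` ?A)" using e0 e1 by blast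
  ultimately show ?thesis using e0 e1 by (intro exI[of _ "min \<eta>0 \<eta>1"]) (auto intro: finite_subset)
qed

lemma lemNoSmall: assumes "a \<in> \<Omega>" shows "\<exists>m>0. \<forall>\<delta>\<in>\<Gamma>. \<delta> \<noteq> id \<longrightarrow> m \<le> chord v (\<delta> a) a"
proof -
  obtain \<eta>0 where e0: "\<eta>0 > 0" "finite {\<gamma>\<in>\<Gamma>. chord v (\<gamma> a) a < \<eta>0}" using lemA assms by blast
  let ?E = "{\<gamma>\<in>\<Gamma>. chord v (\<gamma> a) a < \<eta>0} - {id}"
  define m where "m = Min (insert \<eta>0 ((\<lambda>\<delta>. chord v (\<delta> a) a) ` ?E))"
  have fin: "finite (insert \<eta>0 ((\<lambda>\<delta>. chord v (\<delta> a) a) ` ?E))" using e0 by blast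
  have pos: "\<forall>x\<in>insert \<eta>0 ((\<lambda>\<delta>. chord v (\<delta> a) a) ` ?E). 0 < x"
  proof
    fix x assume "x \<in> insert \<eta>0 ((\<lambda>\<delta>. chord v (\<delta> a) a) ` ?E)"
    then consider "x = \<eta>0" | \<delta> where "\<delta> \<in> ?E" "x = chord v (\<delta> a) a" by blast
    then show "0 < x"
    proof cases
      case 2
      then have "\<delta> a \<noteq> a" using free_action assms by blast
      then show ?thesis using 2 chord_pos by simp
    qed (use e0 in simp)
  qed
  have "0 < m" unfolding m_def using fin pos by (subst Min_gr_iff) auto
  moreover have "m \<le> chord v (\<delta> a) a" if "\<delta> \<in> \<Gamma>" "\<delta> \<noteq> id" for \<delta>
  proof (cases "chord v (\<delta> a) a < \<eta>0")
    case True
    then have "chord v (\<delta> a) a \<in> insert \<eta>0 ((\<lambda>\<delta>. chord v (\<delta> a) a) ` ?E)" using that by blast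
    then show ?thesis unfolding m_def using fin by simp
  next
    case False
    have "m \<le> \<eta>0" unfolding m_def using fin by simp
    then show ?thesis using False by simp
  qed
  ultimately show ?thesis by blast
qed

lemma lemD: assumes "a \<in> \<Omega>" "\<eta> > 0" shows "finite {\<gamma>\<in>\<Gamma>. \<eta> \<le> v (mdet (nm \<gamma>))}"
proof (rule ccontr)
  assume "infinite {\<gamma>\<in>\<Gamma>. \<eta> \<le> v (mdet (nm \<gamma>))}"
  then obtain f :: "nat \<Rightarrow> _" where f: "inj f" "range f \<subseteq> {\<gamma>\<in>\<Gamma>. \<eta> \<le> v (mdet (nm \<gamma>))}"
    using infinite_countable_subset by blast
  have fG: "f n \<in> \<Gamma>" and fd: "\<eta> \<le> v (mdet (nm (f n)))" for n using f by auto
  have "discontinuous_grp v \<Gamma>" using schottky unfolding schottky_def by blast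
  then obtain r q where rq: "strict_mono r" "(\<lambda>n. chord v (f (r n) a) q) \<longlonglongrightarrow> 0"
    unfolding discontinuous_grp_def using fG by blast
  obtain m where m: "m > 0" "\<forall>\<delta>\<in>\<Gamma>. \<delta> \<noteq> id \<longrightarrow> m \<le> chord v (\<delta> a) a" using lemNoSmall assms by blast
  obtain N where N: "\<forall>n\<ge>N. chord v (f (r n) a) q < m * \<eta>"
    using rq(2) lim0_iff[of "\<lambda>n. chord v (f (r n) a) q"] m assms by (meson chord_nonneg mult_pos_pos)
  let ?M = "nm (f (r N))"
  define \<delta> where "\<delta> = inv (f (r N)) \<circ> f (r (Suc N))"
  have dG: "\<delta> \<in> \<Gamma>" unfolding \<delta>_def using fG Gamma_inv Gamma_comp by blast
  have bN: "bij (f (r N))" using fG Gamma_bij by blast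
  have "\<delta> \<noteq> id"
  proof
    assume "\<delta> = id"
    then have "f (r N) \<circ> \<delta> = f (r N)" by simp
    then have "f (r (Suc N)) = f (r N)" unfolding \<delta>_def using bN by (simp add: fun_eq_iff)
    then have "r (Suc N) = r N" using f(1) by (simp add: inj_eq)
    then show False using rq(1) by (simp add: strict_mono_Suc_iff) (metis lessI less_irrefl strict_mono_less)
  qed
  then have c1: "m \<le> chord v (\<delta> a) a" using m dG by blast
  have dM: "mdet (madj ?M) \<noteq> 0" "mn (madj ?M) = 1" using nm[OF fG] by auto
  have "chord v (\<delta> a) a = chord v (mo (madj ?M) (f (r (Suc N)) a)) (mo (madj ?M) (f (r N) a))"
    unfolding \<delta>_def using nm_inv[OF fG] bN by simp (metis bij_inv_f_f)
  also have "\<dots> \<le> chord v (f (r (Suc N)) a) (f (r N) a) / v (mdet ?M)"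
    using chord_lip[OF dM(1)] dM(2) by simp
  also have "\<dots> \<le> chord v (f (r (Suc N)) a) (f (r N) a) / \<eta>"
  proof -
    have "0 < v (mdet ?M) * \<eta>" using fd[of "r N"] assms(2) by (intro mult_pos_pos) auto
    then show ?thesis using fd[of "r N"] by (intro divide_left_mono) auto
  qed
  also have "\<dots> < m"
  proof -
    have "chord v (f (r (Suc N)) a) (f (r N) a) \<le> max (chord v (f (r (Suc N)) a) q) (chord v q (f (r N) a))"
      by (rule chord_ultra)
    also have "\<dots> < m * \<eta>" using N by (simp add: chord_sym)
    finally show ?thesis using assms(2) by (simp add: divide_less_eq)
  qed
  finally show False using c1 by simp
qed

lemma crux: assumes "a \<in> \<Omega>" "b \<in> \<Omega>" "\<epsilon> > 0" shows "finite {\<gamma>\<in>\<Gamma>. \<epsilon> \<le> chord v (\<gamma> a) (\<gamma> b)}"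
proof -
  obtain ea where ea: "ea > 0" "finite {\<gamma>\<in>\<Gamma>. vn (app (nm \<gamma>) (hom a)) < ea}" using lemB assms by blast
  obtain eb where eb: "eb > 0" "finite {\<gamma>\<in>\<Gamma>. vn (app (nm \<gamma>) (hom b)) < eb}" using lemB assms by blast
  define C where "C = vn (hom a) * vn (hom b)"
  have Cp: "C > 0" unfolding C_def using vn_hom_pos by simp
  define e' where "e' = \<epsilon> * ea * eb / C"
  have e'p: "e' > 0" unfolding e'_def using Cp ea eb assms by simp
  have "{\<gamma>\<in>\<Gamma>. \<epsilon> \<le> chord v (\<gamma> a) (\<gamma> b)} \<subseteq>
      {\<gamma>\<in>\<Gamma>. vn (app (nm \<gamma>) (hom a)) < ea} \<union> {\<gamma>\<in>\<Gamma>. vn (app (nm \<gamma>) (hom b)) < eb} \<union>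
      {\<gamma>\<in>\<Gamma>. e' \<le> v (mdet (nm \<gamma>))}"
  proof
    fix \<gamma> assume g: "\<gamma> \<in> {\<gamma>\<in>\<Gamma>. \<epsilon> \<le> chord v (\<gamma> a) (\<gamma> b)}"
    then have gG: "\<gamma> \<in> \<Gamma>" by simp
    let ?M = "nm \<gamma>"
    show "\<gamma> \<in> {\<gamma>\<in>\<Gamma>. vn (app (nm \<gamma>) (hom a)) < ea} \<union> {\<gamma>\<in>\<Gamma>. vn (app (nm \<gamma>) (hom b)) < eb} \<union>
      {\<gamma>\<in>\<Gamma>. e' \<le> v (mdet (nm \<gamma>))}"
    proof (rule ccontr)
      assume "\<not> ?thesis"
      then have A: "ea \<le> vn (app ?M (hom a))" "eb \<le> vn (app ?M (hom b))" "v (mdet ?M) < e'"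
        using gG by auto
      have "\<epsilon> \<le> chord v (\<gamma> a) (\<gamma> b)" using g by simp
      also have "\<dots> = v (mdet ?M) * v (wedge (hom a) (hom b)) / (vn (app ?M (hom a)) * vn (app ?M (hom b)))"
        using chord_mo[OF nm(1)[OF gG]] nm(2)[OF gG] by metis
      also have "\<dots> \<le> v (mdet ?M) * C / (ea * eb)"
        unfolding C_def using A ea eb
        by (intro frac_le mult_left_mono v_wedge_le mult_mono) (auto intro: mult_pos_pos)
      also have "\<dots> < e' * C / (ea * eb)"
        using A(3) Cp ea eb by (intro divide_strict_right_mono mult_strict_right_mono) auto
      also have "\<dots> = \<epsilon>" unfolding e'_def using Cp ea eb by simp
      finally show False by simp
    qed
  qed
  moreover have "finite {\<gamma>\<in>\<Gamma>. e' \<le> v (mdet (nm \<gamma>))}" using lemD assms e'p by blast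
  ultimately show ?thesis using ea eb by (auto intro: finite_subset)
qed

end


context nav begin

definition conv :: "'a set \<Rightarrow> ('a set \<Rightarrow> 'k) \<Rightarrow> 'k \<Rightarrow> bool" where
  "conv S f L \<longleftrightarrow> (\<forall>e>0. \<exists>F0. finite F0 \<and> F0 \<subseteq> S \<and>
        (\<forall>F. finite F \<and> F0 \<subseteq> F \<and> F \<subseteq> S \<longrightarrow> v (f F - L) < e))"

lemma convD: "conv S f L \<Longrightarrow> e > 0 \<Longrightarrow> \<exists>F0. finite F0 \<and> F0 \<subseteq> S \<and>
        (\<forall>F. finite F \<and> F0 \<subseteq> F \<and> F \<subseteq> S \<longrightarrow> v (f F - L) < e)"
  unfolding conv_def by blast

lemma conv_unique: assumes "conv S f L" "conv S f L'" shows "L = L'"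
proof (rule ccontr)
  assume "L \<noteq> L'"
  then have e: "0 < v (L - L')" by simp
  obtain F1 where F1: "finite F1" "F1 \<subseteq> S" "\<forall>F. finite F \<and> F1 \<subseteq> F \<and> F \<subseteq> S \<longrightarrow> v (f F - L) < v (L - L')"
    using convD[OF assms(1) e] by blast
  obtain F2 where F2: "finite F2" "F2 \<subseteq> S" "\<forall>F. finite F \<and> F2 \<subseteq> F \<and> F \<subseteq> S \<longrightarrow> v (f F - L') < v (L - L')"
    using convD[OF assms(2) e] by blast
  have a: "v (f (F1 \<union> F2) - L) < v (L - L')" "v (f (F1 \<union> F2) - L') < v (L - L')"
    using F1 F2 by auto
  have "v (L - L') \<le> max (v (L - f (F1 \<union> F2))) (v (f (F1 \<union> F2) - L'))" by (rule v_tri)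
  then show False using a by (simp add: v_diff_comm)
qed

lemma conv_mult: assumes "conv S f L" "conv S g M" shows "conv S (\<lambda>F. f F * g F) (L * M)"
  unfolding conv_def
proof (intro allI impI)
  fix e :: real assume e: "0 < e"
  define B where "B = max (v L) (v M) + 1"
  have "0 \<le> max (v L) (v M)" by (simp add: le_max_iff_disj)
  then have Bp: "0 < B" unfolding B_def by linarith
  define d where "d = min 1 (e / (2 * B))"
  have dp: "0 < d" unfolding d_def using e Bp by simp
  have Bd: "B * d < e"
  proof -
    have "B * d \<le> B * (e / (2 * B))" unfolding d_def using Bp by (intro mult_left_mono) auto
    also have "\<dots> = e / 2" using Bp by simp
    finally show ?thesis using e by simp
  qed
  obtain F1 where F1: "finite F1" "F1 \<subseteq> S" "\<forall>F. finite F \<and> F1 \<subseteq> F \<and> F \<subseteq> S \<longrightarrow> v (f F - L) < d"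
    using convD[OF assms(1) dp] by blast
  obtain F2 where F2: "finite F2" "F2 \<subseteq> S" "\<forall>F. finite F \<and> F2 \<subseteq> F \<and> F \<subseteq> S \<longrightarrow> v (g F - M) < d"
    using convD[OF assms(2) dp] by blast
  show "\<exists>F0. finite F0 \<and> F0 \<subseteq> S \<and> (\<forall>F. finite F \<and> F0 \<subseteq> F \<and> F \<subseteq> S \<longrightarrow> v (f F * g F - L * M) < e)"
  proof (intro exI[of _ "F1 \<union> F2"] conjI allI impI)
    show "finite (F1 \<union> F2)" "F1 \<union> F2 \<subseteq> S" using F1 F2 by auto
    fix F assume F: "finite F \<and> F1 \<union> F2 \<subseteq> F \<and> F \<subseteq> S"
    have a: "v (f F - L) < d" "v (g F - M) < d" using F F1 F2 by auto
    have vf: "v (f F) \<le> B"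
    proof -
      have "v (f F) \<le> max (v (f F - L)) (v L)" using v_add[of "f F - L" L] by simp
      also have "\<dots> \<le> B"
      proof -
        have "v (f F - L) < 1" using a d_def by simp
        moreover have "0 \<le> v M" "0 \<le> v L" by simp_all
        ultimately show ?thesis unfolding B_def max_def by (smt (verit))
      qed
      finally show ?thesis .
    qed
    have "f F * g F - L * M = f F * (g F - M) + (f F - L) * M" by (simp add: algebra_simps)
    then have "v (f F * g F - L * M) \<le> max (v (f F) * v (g F - M)) (v (f F - L) * v M)"
      using v_add[of "f F * (g F - M)" "(f F - L) * M"] by (simp add: v_mult)
    also have "\<dots> \<le> B * d"
    proof -
      have "v (f F) * v (g F - M) \<le> B * d" using vf a Bp by (intro mult_mono) auto
      moreover have "v (f F - L) * v M \<le> d * B" using a dp unfolding B_def by (intro mult_mono) (auto simp: le_max_iff_disj)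
      ultimately show ?thesis by (simp add: mult.commute)
    qed
    finally show "v (f F * g F - L * M) < e" using Bd by simp
  qed
qed

lemma conv_reindex: assumes "bij_betw \<phi> S' S" "conv S f L" shows "conv S' (\<lambda>F. f (\<phi> ` F)) L"
  unfolding conv_def
proof (intro allI impI)
  fix e :: real assume e: "0 < e"
  obtain F0 where F0: "finite F0" "F0 \<subseteq> S" "\<forall>F. finite F \<and> F0 \<subseteq> F \<and> F \<subseteq> S \<longrightarrow> v (f F - L) < e"
    using convD[OF assms(2) e] by blast
  have surj: "\<phi> ` S' = S" using assms(1) by (rule bij_betw_imp_surj_on)
  let ?G = "inv_into S' \<phi> ` F0"
  have G1: "finite ?G" using F0(1) by (rule finite_imageI)
  have G2: "?G \<subseteq> S'"
  proof
    fix y assume "y \<in> ?G"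
    then obtain x where x: "x \<in> F0" "y = inv_into S' \<phi> x" by blast
    then have "x \<in> \<phi> ` S'" using F0(2) surj by blast
    then show "y \<in> S'" unfolding x(2) by (rule inv_into_into)
  qed
  have img: "\<phi> ` ?G = F0"
  proof -
    have "\<phi> ` ?G = (\<lambda>x. \<phi> (inv_into S' \<phi> x)) ` F0" by (simp only: image_image)
    also have "\<dots> = (\<lambda>x. x) ` F0"
    proof (rule image_cong)
      fix x assume "x \<in> F0"
      then have "x \<in> \<phi> ` S'" using F0(2) surj by blast
      then show "\<phi> (inv_into S' \<phi> x) = x" by (rule f_inv_into_f)
    qed simp
    finally show ?thesis by simp
  qed
  show "\<exists>F0. finite F0 \<and> F0 \<subseteq> S' \<and> (\<forall>F. finite F \<and> F0 \<subseteq> F \<and> F \<subseteq> S' \<longrightarrow> v (f (\<phi> ` F) - L) < e)"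
  proof (intro exI[of _ ?G] conjI allI impI)
    fix F assume F: "finite F \<and> ?G \<subseteq> F \<and> F \<subseteq> S'"
    have "F0 \<subseteq> \<phi> ` F" using F image_mono img by metis
    moreover have "\<phi> ` F \<subseteq> S" using F image_mono surj by metis
    moreover have "finite (\<phi> ` F)" using F by simp
    ultimately show "v (f (\<phi> ` F) - L) < e" using F0(3) by blast
  qed (fact G1, fact G2)
qed

lemma conv_insert: assumes "conv (S - {e0}) f L" "e0 \<in> S"
  "\<And>F. finite F \<Longrightarrow> e0 \<in> F \<Longrightarrow> F \<subseteq> S \<Longrightarrow> g F = c * f (F - {e0})"
  shows "conv S g (c * L)"
  unfolding conv_def
proof (intro allI impI)
  fix e :: real assume e: "0 < e"
  have d: "0 < e / (v c + 1)" using e by (simp add: add_nonneg_pos)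
  obtain F0 where F0: "finite F0" "F0 \<subseteq> S - {e0}" "\<forall>F. finite F \<and> F0 \<subseteq> F \<and> F \<subseteq> S - {e0} \<longrightarrow> v (f F - L) < e / (v c + 1)"
    using convD[OF assms(1) d] by blast
  show "\<exists>F0. finite F0 \<and> F0 \<subseteq> S \<and> (\<forall>F. finite F \<and> F0 \<subseteq> F \<and> F \<subseteq> S \<longrightarrow> v (g F - c * L) < e)"
  proof (intro exI[of _ "insert e0 F0"] conjI allI impI)
    show "finite (insert e0 F0)" using F0(1) by simp
    show "insert e0 F0 \<subseteq> S" using F0(2) assms(2) by blast
    fix F assume F: "finite F \<and> insert e0 F0 \<subseteq> F \<and> F \<subseteq> S"
    have "finite (F - {e0}) \<and> F0 \<subseteq> F - {e0} \<and> F - {e0} \<subseteq> S - {e0}" using F F0(2) by blast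
    then have a: "v (f (F - {e0}) - L) < e / (v c + 1)" using F0(3) by blast
    have "g F - c * L = c * (f (F - {e0}) - L)" using assms(3)[of F] F by (simp add: algebra_simps)
    then have "v (g F - c * L) = v c * v (f (F - {e0}) - L)" by (simp add: v_mult)
    also have "\<dots> \<le> v c * (e / (v c + 1))" using a by (intro mult_left_mono) auto
    also have "\<dots> < e"
    proof -
      have p: "0 < v c + 1" by (simp add: add_nonneg_pos)
      have "v c * e < (v c + 1) * e" using e by simp
      then show ?thesis using p by (simp add: divide_less_eq mult.commute)
    qed
    finally show "v (g F - c * L) < e" .
  qed
qed

lemma prod_close: assumes "finite F" "\<forall>x\<in>F. v (t x - 1) < \<epsilon>" "0 < \<epsilon>" "\<epsilon> \<le> 1"
  shows "v (prod t F - 1) < \<epsilon>"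
  using assms
proof (induction F rule: finite_induct)
  case empty then show ?case by simp
next
  case (insert x F)
  have IH: "v (prod t F - 1) < \<epsilon>" using insert by simp
  have vp: "v (prod t F) \<le> 1"
  proof -
    have "v (prod t F) \<le> max (v (prod t F - 1)) (v 1)" using v_add[of "prod t F - 1" 1] by simp
    then show ?thesis using IH insert.prems by (auto simp: max_def)
  qed
  have "prod t (insert x F) - 1 = (t x - 1) * prod t F + (prod t F - 1)"
    using insert by (simp add: algebra_simps)
  moreover have "v ((t x - 1) * prod t F) < \<epsilon>"
  proof -
    have "v ((t x - 1) * prod t F) \<le> v (t x - 1)" using vp by (simp add: v_mult mult_left_le)
    then show ?thesis using insert.prems by auto
  qed
  ultimately show ?case using IH v_add_less[of "(t x - 1) * prod t F" \<epsilon> "prod t F - 1"]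
    by (simp add: algebra_simps)
qed

lemma v_near1: "v (x - 1) < 1 \<Longrightarrow> v x = 1"
  using v_close[of x 1] by simp

lemma conv_exists:
  assumes cw: "complete_wrt v" and fin: "\<And>e. e > 0 \<Longrightarrow> finite {x\<in>S. e \<le> v (t x - 1)}"
  shows "\<exists>L. conv S (\<lambda>F. prod t F) L \<and> ((\<forall>x\<in>S. t x \<noteq> 0) \<longrightarrow> L \<noteq> 0)"
proof -
  define G where "G n = {x\<in>S. 1 / (real n + 2) \<le> v (t x - 1)}" for n :: nat
  define H where "H n = (\<Union>k\<le>n. G k)" for n
  have Gf: "finite (G n)" for n unfolding G_def by (rule fin) simp
  have Hf: "finite (H n)" for n unfolding H_def using Gf by simp
  have HS: "H n \<subseteq> S" for n unfolding H_def G_def by auto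
  have Hmono: "m \<le> n \<Longrightarrow> H m \<subseteq> H n" for m n unfolding H_def
    by (intro UN_mono) auto
  have notG: "x \<in> S \<Longrightarrow> x \<notin> H n \<Longrightarrow> v (t x - 1) < 1 / (real n + 2)" for x n
    unfolding H_def G_def by force
  define X where "X n = prod t (H n)" for n
  define c where "c = v (X 0)"
  have split: "prod t F = X n * prod t (F - H n)" if "finite F" "H n \<subseteq> F" for F n
    unfolding X_def using prod.subset_diff[OF that(2) that(1), of t] by (simp add: mult.commute)
  have close: "v (prod t (F - H n) - 1) < 1 / (real n + 2)" if "finite F" "F \<subseteq> S" for F n
    using that notG by (intro prod_close) auto
  have vX: "v (X n) = c" for n
  proof -
    have "X n = X 0 * prod t (H n - H 0)" using split[OF Hf Hmono[of 0 n]] unfolding X_def by simp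
    moreover have "v (prod t (H n - H 0) - 1) < 1" using close[OF Hf HS, of n 0]
      by (smt (verit) divide_le_eq_1 of_nat_0_le_iff)
    ultimately show ?thesis unfolding c_def using v_near1 by (simp add: v_mult)
  qed
  have near: "v (prod t F - X n) \<le> c / (real n + 2)" if "finite F" "H n \<subseteq> F" "F \<subseteq> S" for F n
  proof -
    have "prod t F - X n = X n * (prod t (F - H n) - 1)" using split[OF that(1,2)] by (simp add: algebra_simps)
    then have "v (prod t F - X n) = c * v (prod t (F - H n) - 1)" by (simp add: v_mult vX)
    also have "\<dots> \<le> c * (1 / (real n + 2))" using close[OF that(1,3), of n] unfolding c_def
      by (intro mult_left_mono) auto
    finally show ?thesis by simp
  qed
  have c0: "0 \<le> c" unfolding c_def by simp
  have smallN: "\<exists>N::nat. c / (real N + 2) < e" if "e > 0" for e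
  proof -
    obtain N :: nat where "c / e < real N" using reals_Archimedean2 by blast
    then have "c < e * real N" using that by (simp add: divide_less_eq mult.commute)
    then have "c < e * (real N + 2)" using that by (smt (verit) mult_left_mono of_nat_0_le_iff)
    then show ?thesis using that by (intro exI[of _ N]) (simp add: divide_less_eq mult.commute)
  qed
  have cauchy: "\<forall>e>0. \<exists>N. \<forall>m\<ge>N. \<forall>n\<ge>N. v (X m - X n) < e"
  proof (intro allI impI)
    fix e :: real assume e: "0 < e"
    obtain N :: nat where N: "c / (real N + 2) < e" using smallN e by blast
    have "v (X m - X N) < e" if "m \<ge> N" for m
      using near[OF Hf Hmono[OF that] HS] N unfolding X_def by simp
    then have "v (X m - X n) < e" if "m \<ge> N" "n \<ge> N" for m n
    proof -
      have "v (X m - X N) < e" "v (X n - X N) < e" using that \<open>\<And>m. N \<le> m \<Longrightarrow> v (X m - X N) < e\<close> by auto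
      then show ?thesis using v_tri[of "X m" "X n" "X N"] v_diff_comm[of "X N" "X n"] by simp
    qed
    then show "\<exists>N. \<forall>m\<ge>N. \<forall>n\<ge>N. v (X m - X n) < e" by blast
  qed
  then obtain L where L: "\<forall>e>0. \<exists>N. \<forall>n\<ge>N. v (X n - L) < e"
    using cw unfolding complete_wrt_def by blast
  have "conv S (\<lambda>F. prod t F) L"
    unfolding conv_def
  proof (intro allI impI)
    fix e :: real assume e: "0 < e"
    obtain N1 :: nat where N1: "c / (real N1 + 2) < e" using smallN e by blast
    obtain N2 where N2: "\<forall>n\<ge>N2. v (X n - L) < e" using L e by blast
    let ?n = "max N1 N2"
    have "c / (real ?n + 2) \<le> c / (real N1 + 2)" using c0 by (intro divide_left_mono) auto
    then have n1: "c / (real ?n + 2) < e" using N1 by simp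
    have n2: "v (X ?n - L) < e" using N2 by simp
    show "\<exists>F0. finite F0 \<and> F0 \<subseteq> S \<and> (\<forall>F. finite F \<and> F0 \<subseteq> F \<and> F \<subseteq> S \<longrightarrow> v (prod t F - L) < e)"
    proof (intro exI[of _ "H ?n"] conjI allI impI)
      fix F assume F: "finite F \<and> H ?n \<subseteq> F \<and> F \<subseteq> S"
      have "v (prod t F - X ?n) < e" using near[of F ?n] F n1 by simp
      then show "v (prod t F - L) < e" using n2 v_tri[of "prod t F" L "X ?n"] by simp
    qed (use Hf HS in auto)
  qed
  moreover have "L \<noteq> 0" if nz: "\<forall>x\<in>S. t x \<noteq> 0"
  proof -
    have "X 0 \<noteq> 0" unfolding X_def using nz HS Hf by (simp add: subset_iff)
    then have cp: "0 < c" unfolding c_def by simp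
    obtain N where "\<forall>n\<ge>N. v (X n - L) < c" using L cp by blast
    then have "v (X N - L) < v (X N)" using vX by simp
    then have "v L = v (X N)" using v_close[of L "X N"] by (simp add: v_diff_comm)
    then show ?thesis using vX cp by auto
  qed
  ultimately show ?thesis by blast
qed

end


lemma tf_wedge: "theta_fac w \<alpha> \<beta> = wedge (w, 1) (hom \<alpha>) / wedge (w, 1) (hom \<beta>)"
  unfolding theta_fac_def by (cases \<alpha>; cases \<beta>) auto

lemma tf_mo: assumes "mdet M \<noteq> 0" "mo M (Some z) = Some w"
  shows "theta_fac w (mo M \<alpha>) (mo M \<beta>) = (kap M \<alpha> / kap M \<beta>) * theta_fac z \<alpha> \<beta>"
proof -
  have hz: "(w, 1) = smul (kap M (Some z)) (app M (z, 1))"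
    using kap(2)[OF assms(1), of "Some z"] assms(2) by simp
  have kz: "kap M (Some z) \<noteq> 0" using kap(1)[OF assms(1)] by blast
  have e: "wedge (w, 1) (hom (mo M x)) = kap M (Some z) * mdet M * (kap M x * wedge (z, 1) (hom x))" for x
    unfolding hz kap(2)[OF assms(1), of x] by (simp add: wedge_app)
  show ?thesis unfolding tf_wedge e using kz assms(1)
    by (simp add: mult_divide_mult_cancel_left_if times_divide_times_eq del: mult_divide_mult_cancel_left)
qed

context nav begin

lemma conv_cong: assumes "\<And>F. finite F \<Longrightarrow> F \<subseteq> S \<Longrightarrow> f F = g F" shows "conv S f L = conv S g L"
  unfolding conv_def using assms by (metis (no_types, lifting))

end

context setting begin

definition Pf :: "'k option \<Rightarrow> 'k option \<Rightarrow> 'k \<Rightarrow> ('k option \<Rightarrow> 'k option) set \<Rightarrow> 'k" where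
  "Pf a b z F = (\<Prod>\<gamma>\<in>F. theta_fac z (\<gamma> a) (\<gamma> b))"

lemma chord_SS: "chord v (Some x) (Some y) = v (x - y) / (max 1 (v x) * max 1 (v y))"
  unfolding chord_def by simp

lemma chord_SN: "chord v (Some x) None = 1 / max 1 (v x)"
  unfolding chord_def by simp

lemma factor_fin: assumes "a \<in> \<Omega>" "b \<in> \<Omega>" "Some z \<in> \<Omega>" "e > 0"
  shows "finite {\<gamma>\<in>\<Gamma>. e \<le> v (theta_fac z (\<gamma> a) (\<gamma> b) - 1)}"
proof -
  obtain e1 where e1: "e1 > 0" "finite {\<gamma>\<in>\<Gamma>. chord v (\<gamma> a) None < e1}" using lemA inf_ord by blast
  obtain e2 where e2: "e2 > 0" "finite {\<gamma>\<in>\<Gamma>. chord v (\<gamma> b) None < e2}" using lemA inf_ord by blast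
  obtain e3 where e3: "e3 > 0" "finite {\<gamma>\<in>\<Gamma>. chord v (\<gamma> b) (Some z) < e3}" using lemA assms(3) by blast
  have e4: "finite {\<gamma>\<in>\<Gamma>. e * e1 * e2 * e3 \<le> chord v (\<gamma> a) (\<gamma> b)}"
    using crux assms e1 e2 e3 by simp
  have "{\<gamma>\<in>\<Gamma>. e \<le> v (theta_fac z (\<gamma> a) (\<gamma> b) - 1)} \<subseteq>
     {\<gamma>\<in>\<Gamma>. chord v (\<gamma> a) None < e1} \<union> {\<gamma>\<in>\<Gamma>. chord v (\<gamma> b) None < e2} \<union>
     {\<gamma>\<in>\<Gamma>. chord v (\<gamma> b) (Some z) < e3} \<union> {\<gamma>\<in>\<Gamma>. e * e1 * e2 * e3 \<le> chord v (\<gamma> a) (\<gamma> b)}"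
  proof
    fix \<gamma> assume g: "\<gamma> \<in> {\<gamma>\<in>\<Gamma>. e \<le> v (theta_fac z (\<gamma> a) (\<gamma> b) - 1)}"
    show "\<gamma> \<in> {\<gamma>\<in>\<Gamma>. chord v (\<gamma> a) None < e1} \<union> {\<gamma>\<in>\<Gamma>. chord v (\<gamma> b) None < e2} \<union>
     {\<gamma>\<in>\<Gamma>. chord v (\<gamma> b) (Some z) < e3} \<union> {\<gamma>\<in>\<Gamma>. e * e1 * e2 * e3 \<le> chord v (\<gamma> a) (\<gamma> b)}"
    proof (rule ccontr)
      assume "\<not> ?thesis"
      then have c: "e1 \<le> chord v (\<gamma> a) None" "e2 \<le> chord v (\<gamma> b) None"
        "e3 \<le> chord v (\<gamma> b) (Some z)" "chord v (\<gamma> a) (\<gamma> b) < e * e1 * e2 * e3"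
        using g by auto
      obtain y where y: "\<gamma> a = Some y" using c(1) e1 by (cases "\<gamma> a") auto
      obtain x where x: "\<gamma> b = Some x" using c(2) e2 by (cases "\<gamma> b") auto
      have my: "max 1 (v y) \<le> 1 / e1" using c(1) e1 unfolding y chord_SN
        by (simp add: le_divide_eq field_simps)
      have mx: "max 1 (v x) \<le> 1 / e2" using c(2) e2 unfolding x chord_SN
        by (simp add: le_divide_eq field_simps)
      have pmx: "0 < max 1 (v x)" "0 < max 1 (v y)" "0 < max 1 (v z)" by (auto simp: less_max_iff_disj)
      have "e3 \<le> v (x - z) / (max 1 (v x) * max 1 (v z))" using c(3) unfolding x chord_SS .
      then have "e3 * (max 1 (v x) * max 1 (v z)) \<le> v (x - z)" using pmx by (simp add: le_divide_eq)
      moreover have "1 * 1 \<le> max 1 (v x) * max 1 (v z)" by (intro mult_mono) auto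
      ultimately have vxz: "e3 \<le> v (x - z)" using e3 by (smt (verit) mult_le_cancel_left1)
      have "v (y - x) / (max 1 (v y) * max 1 (v x)) < e * e1 * e2 * e3" using c(4) unfolding x y chord_SS .
      then have "v (y - x) < e * e1 * e2 * e3 * (max 1 (v y) * max 1 (v x))" using pmx by (simp add: divide_less_eq)
      also have "\<dots> \<le> e * e1 * e2 * e3 * ((1 / e1) * (1 / e2))"
        using my mx pmx e1 e2 e3 assms(4) by (intro mult_left_mono mult_mono) auto
      also have "\<dots> = e * e3" using e1 e2 by simp
      finally have vyx: "v (y - x) < e * e3" .
      have xz: "z - x \<noteq> 0" using vxz e3 by (auto simp: v_diff_comm)
      have "theta_fac z (\<gamma> a) (\<gamma> b) - 1 = (x - y) / (z - x)"
        unfolding x y theta_fac_def using xz by (simp add: field_simps)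
      then have "v (theta_fac z (\<gamma> a) (\<gamma> b) - 1) = v (y - x) / v (z - x)" by (simp add: v_divide v_diff_comm)
      also have "\<dots> < e * e3 / e3"
      proof -
        have vzx: "e3 \<le> v (z - x)" using vxz by (simp add: v_diff_comm)
        have "0 < v (z - x)" using vzx e3(1) by linarith
        then have "0 < v (z - x) * e3" using e3(1) by simp
        then have "v (y - x) / v (z - x) \<le> v (y - x) / e3" using vzx by (intro divide_left_mono) auto
        also have "\<dots> < e * e3 / e3" using vyx e3 by (intro divide_strict_right_mono) auto
        finally show ?thesis .
      qed
      also have "\<dots> = e" using e3 by simp
      finally show False using g by simp
    qed
  qed
  then show ?thesis using e1 e2 e3 e4 by (meson finite_Un finite_subset)
qed

lemma cw: "complete_wrt v" using field unfolding complete_nonarch_acf_def by blast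

lemma theta_conv: assumes "a \<in> \<Omega>" "b \<in> \<Omega>" "Some z \<in> \<Omega>" "S \<subseteq> \<Gamma>"
  shows "\<exists>L. conv S (Pf a b z) L \<and> ((\<forall>\<gamma>\<in>S. \<gamma> a \<noteq> Some z \<and> \<gamma> b \<noteq> Some z) \<longrightarrow> L \<noteq> 0)"
proof -
  have fin: "finite {\<gamma>\<in>S. e \<le> v (theta_fac z (\<gamma> a) (\<gamma> b) - 1)}" if "e > 0" for e
    by (rule finite_subset[OF _ factor_fin[OF assms(1-3) that]]) (use assms(4) in blast)
  obtain L where L: "conv S (\<lambda>F. \<Prod>\<gamma>\<in>F. theta_fac z (\<gamma> a) (\<gamma> b)) L"
    "(\<forall>\<gamma>\<in>S. theta_fac z (\<gamma> a) (\<gamma> b) \<noteq> 0) \<longrightarrow> L \<noteq> 0"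
    using conv_exists[OF cw fin] by blast
  have "theta_fac z (\<gamma> a) (\<gamma> b) \<noteq> 0" if "\<gamma> a \<noteq> Some z" "\<gamma> b \<noteq> Some z" for \<gamma>
    using that unfolding theta_fac_def by (auto split: option.splits)
  then show ?thesis using L unfolding Pf_def by (metis (no_types, lifting) ext)
qed

lemma Theta_eq: assumes "conv \<Gamma> (Pf a b z) L" shows "Theta v \<Gamma> a b z = L"
proof -
  have th: "theta_has v \<Gamma> a b z = conv \<Gamma> (Pf a b z)"
    unfolding theta_has_def conv_def Pf_def by (simp add: fun_eq_iff)
  show ?thesis unfolding Theta_def th using assms conv_unique by blast
qed

lemma funeq:
  assumes M: "mdet M \<noteq> 0" and phi: "bij_betw \<phi> S' S"
    and ab: "\<And>\<gamma>. \<gamma> \<in> S' \<Longrightarrow> mo M (\<gamma> a') = \<phi> \<gamma> a \<and> mo M (\<gamma> b') = \<phi> \<gamma> b"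
    and z0: "mo M (Some z0) = Some w0" "conv S' (Pf a' b' z0) L0'" "conv S (Pf a b w0) L0" "L0' \<noteq> 0"
    and z: "mo M (Some z) = Some w" "conv S' (Pf a' b' z) L1" "conv S (Pf a b w) L2"
  shows "L2 = L1 * (L0 / L0')"
proof -
  define \<rho> where "\<rho> F = (\<Prod>\<gamma>\<in>F. kap M (\<gamma> a') / kap M (\<gamma> b'))" for F
  have key: "Pf a b w' (\<phi> ` F) = Pf a' b' z' F * \<rho> F"
    if "finite F" "F \<subseteq> S'" "mo M (Some z') = Some w'" for F z' w'
  proof -
    have inj: "inj_on \<phi> F" using phi that(2) bij_betw_def inj_on_subset by metis
    have "Pf a b w' (\<phi> ` F) = (\<Prod>\<gamma>\<in>F. theta_fac w' (\<phi> \<gamma> a) (\<phi> \<gamma> b))"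
      unfolding Pf_def using prod.reindex[OF inj] by simp
    also have "\<dots> = (\<Prod>\<gamma>\<in>F. (kap M (\<gamma> a') / kap M (\<gamma> b')) * theta_fac z' (\<gamma> a') (\<gamma> b'))"
    proof (rule prod.cong)
      fix \<gamma> assume "\<gamma> \<in> F"
      then have "mo M (\<gamma> a') = \<phi> \<gamma> a" "mo M (\<gamma> b') = \<phi> \<gamma> b" using ab that(2) by auto
      then show "theta_fac w' (\<phi> \<gamma> a) (\<phi> \<gamma> b) = (kap M (\<gamma> a') / kap M (\<gamma> b')) * theta_fac z' (\<gamma> a') (\<gamma> b')"
        using tf_mo[OF M that(3)] by metis
    qed simp
    also have "\<dots> = Pf a' b' z' F * \<rho> F" unfolding Pf_def \<rho>_def prod.distrib[symmetric]
      by (rule prod.cong) (simp_all add: mult.commute)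
    finally show ?thesis .
  qed
  have c2: "conv S' (\<lambda>F. Pf a b w (\<phi> ` F)) L2" using conv_reindex[OF phi z(3)] .
  have c0: "conv S' (\<lambda>F. Pf a b w0 (\<phi> ` F)) L0" using conv_reindex[OF phi z0(3)] .
  have A: "conv S' (\<lambda>F. Pf a b w (\<phi> ` F) * Pf a' b' z0 F) (L2 * L0')" using conv_mult[OF c2 z0(2)] .
  have B: "conv S' (\<lambda>F. Pf a' b' z F * Pf a b w0 (\<phi> ` F)) (L1 * L0)" using conv_mult[OF z(2) c0] .
  have "conv S' (\<lambda>F. Pf a b w (\<phi> ` F) * Pf a' b' z0 F) (L1 * L0)"
  proof (subst conv_cong)
    show "Pf a b w (\<phi> ` F) * Pf a' b' z0 F = Pf a' b' z F * Pf a b w0 (\<phi> ` F)" if "finite F" "F \<subseteq> S'" for F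
      using key[OF that z(1)] key[OF that z0(1)] by (simp add: ac_simps)
  qed (rule B)
  then have "L2 * L0' = L1 * L0" using A conv_unique by blast
  then show ?thesis using z0(4) by (simp add: field_simps)
qed

end


fun adj_ok :: "(nat \<times> nat) list \<Rightarrow> bool" where
  "adj_ok [] = True"
| "adj_ok [x] = True"
| "adj_ok (x # y # r) = (fst x \<noteq> fst y \<and> adj_ok (y # r))"

lemma adj_ok_iff: "adj_ok r \<longleftrightarrow> (\<forall>n. Suc n < length r \<longrightarrow> fst (r ! n) \<noteq> fst (r ! Suc n))"
proof (induction r rule: adj_ok.induct)
  case (3 x y r)
  show ?case
  proof
    assume a: "adj_ok (x # y # r)"
    show "\<forall>n. Suc n < length (x # y # r) \<longrightarrow> fst ((x # y # r) ! n) \<noteq> fst ((x # y # r) ! Suc n)"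
    proof (intro allI impI)
      fix n assume n: "Suc n < length (x # y # r)"
      show "fst ((x # y # r) ! n) \<noteq> fst ((x # y # r) ! Suc n)"
      proof (cases n)
        case 0 then show ?thesis using a by simp
      next
        case (Suc m)
        then show ?thesis using a 3 n by simp
      qed
    qed
  next
    assume a: "\<forall>n. Suc n < length (x # y # r) \<longrightarrow> fst ((x # y # r) ! n) \<noteq> fst ((x # y # r) ! Suc n)"
    have "fst x \<noteq> fst y" using a[rule_format, of 0] by simp
    moreover have "adj_ok (y # r)" unfolding 3
    proof (intro allI impI)
      fix n assume "Suc n < length (y # r)"
      then show "fst ((y # r) ! n) \<noteq> fst ((y # r) ! Suc n)" using a[rule_format, of "Suc n"] by simp
    qed
    ultimately show "adj_ok (x # y # r)" by simp
  qed
qed auto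

lemma adj_ok_tl: "adj_ok (x # r) \<Longrightarrow> adj_ok r"
  by (cases r) auto

context setting begin

definition weval :: "(nat \<times> nat) list \<Rightarrow> 'k option \<Rightarrow> 'k option" where
  "weval w = foldr (\<lambda>(i, k) f. (\<sigma> i ^^ k) \<circ> f) w id"

lemma weval_Nil[simp]: "weval [] = id" by (simp add: weval_def)
lemma weval_Cons[simp]: "weval ((l, k) # w) = (\<sigma> l ^^ k) \<circ> weval w" by (simp add: weval_def)
lemma weval_append: "weval (w1 @ w2) = weval w1 \<circ> weval w2"
  by (induction w1) (auto simp: weval_def)

definition es :: "nat \<Rightarrow> (nat \<times> nat) list \<Rightarrow> nat" where
  "es i w = sum_list (map (\<lambda>(l, k). if l = i then k else 0) w)"

lemma es_Nil[simp]: "es i [] = 0" by (simp add: es_def)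
lemma es_Cons[simp]: "es i ((l, k) # w) = (if l = i then k else 0) + es i w" by (simp add: es_def)
lemma es_append: "es i (w1 @ w2) = es i w1 + es i w2" by (simp add: es_def)

definition okw :: "(nat \<times> nat) list \<Rightarrow> bool" where
  "okw w \<longleftrightarrow> (\<forall>(l, k)\<in>set w. l \<le> s)"

definition rdw :: "(nat \<times> nat) list \<Rightarrow> bool" where
  "rdw w \<longleftrightarrow> (\<forall>(l, k)\<in>set w. l \<le> s \<and> 0 < k \<and> k < p) \<and> adj_ok w"

lemma sig_pow_mod: assumes "l \<le> s" shows "\<sigma> l ^^ k = \<sigma> l ^^ (k mod p)"
proof -
  have "\<sigma> l ^^ k = \<sigma> l ^^ (k mod p + p * (k div p))" by simp
  also have "\<dots> = \<sigma> l ^^ (k mod p) \<circ> \<sigma> l ^^ (p * (k div p))" by (simp only: funpow_add)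
  also have "\<dots> = \<sigma> l ^^ (k mod p) \<circ> ((\<sigma> l ^^ p) ^^ (k div p))" by (simp only: funpow_mult)
  also have "\<dots> = \<sigma> l ^^ (k mod p)" using sigma_in assms by simp
  finally show ?thesis .
qed

lemma sig_pow_add: "\<sigma> l ^^ a \<circ> \<sigma> l ^^ b = \<sigma> l ^^ (a + b)" by (simp add: funpow_add)

definition push :: "nat \<times> nat \<Rightarrow> (nat \<times> nat) list \<Rightarrow> (nat \<times> nat) list" where
  "push x r = (let l = fst x; k = snd x mod p in
     if k = 0 then r else
     (case r of [] \<Rightarrow> [(l, k)]
      | y # r' \<Rightarrow> if l = fst y then (let m = (k + snd y) mod p in if m = 0 then r' else (l, m) # r')
                 else (l, k) # r))"

fun red :: "(nat \<times> nat) list \<Rightarrow> (nat \<times> nat) list" where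
  "red [] = []"
| "red (x # w) = push x (red w)"

lemma modh: "(k::nat) mod p = k' mod p \<Longrightarrow> (k + e) mod p = (k' + e) mod p"
  by (metis mod_add_left_eq)

lemma push_zero: "k mod p = 0 \<Longrightarrow> push (l, k) r = r"
  by (simp add: push_def Let_def)
lemma push_nil: "k mod p \<noteq> 0 \<Longrightarrow> push (l, k) [] = [(l, k mod p)]"
  by (simp add: push_def Let_def)
lemma push_same: "k mod p \<noteq> 0 \<Longrightarrow> push (l, k) ((l, k2) # r') =
    (if (k mod p + k2) mod p = 0 then r' else (l, (k mod p + k2) mod p) # r')"
  by (simp add: push_def Let_def)
lemma push_diff: "k mod p \<noteq> 0 \<Longrightarrow> l \<noteq> l2 \<Longrightarrow> push (l, k) ((l2, k2) # r') = (l, k mod p) # (l2, k2) # r'"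
  by (simp add: push_def Let_def)

lemma push_props: assumes "rdw r" "l \<le> s"
  shows "rdw (push (l, k) r) \<and> weval (push (l, k) r) = \<sigma> l ^^ k \<circ> weval r \<and>
      es i (push (l, k) r) mod p = ((if l = i then k else 0) + es i r) mod p"
proof -
  have pp: "0 < p" using p_ge2 by simp
  let ?c = "if l = i then k else 0"
  show ?thesis
  proof (cases "k mod p = 0")
    case True
    then have "\<sigma> l ^^ k = id" using sig_pow_mod[OF assms(2), of k] by simp
    moreover have "(?c + es i r) mod p = (0 + es i r) mod p" using True by (intro modh) auto
    ultimately show ?thesis using True assms push_zero by simp
  next
    case kF: False
    let ?k = "k mod p"
    have kk: "0 < ?k" "?k < p" using kF pp by auto
    have sk: "\<sigma> l ^^ k = \<sigma> l ^^ ?k" using sig_pow_mod[OF assms(2)] by blast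
    have ck: "(?c + e) mod p = ((if l = i then ?k else 0) + e) mod p" for e by (intro modh) auto
    show ?thesis
    proof (cases r)
      case Nil
      have "rdw [(l, ?k)]" using kk assms(2) unfolding rdw_def by simp
      then show ?thesis using kF sk ck[of 0] Nil push_nil by simp
    next
      case (Cons y r')
      obtain l2 k2 where y: "y = (l2, k2)" by (cases y)
      have r'ok: "rdw r'" using assms(1) unfolding Cons rdw_def by (auto dest: adj_ok_tl)
      have k2: "0 < k2" "k2 < p" "l2 \<le> s" using assms(1) unfolding Cons y rdw_def by auto
      show ?thesis
      proof (cases "l = l2")
        case True
        let ?m = "(?k + k2) mod p"
        have sm: "\<sigma> l ^^ k \<circ> \<sigma> l ^^ k2 = \<sigma> l ^^ ?m"
          using sk sig_pow_add sig_pow_mod[OF assms(2)] by metis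
        have esm: "(?c + ((if l = i then k2 else 0) + es i r')) mod p =
                   ((if l = i then ?m else 0) + es i r') mod p"
        proof (cases "l = i")
          case True
          have "(k + (k2 + es i r')) mod p = ((k + k2) + es i r') mod p" by (simp add: add.assoc)
          also have "\<dots> = (?m + es i r') mod p" by (intro modh) (simp add: mod_add_left_eq)
          finally show ?thesis using True by simp
        qed simp
        have ew: "weval r = \<sigma> l ^^ k2 \<circ> weval r'" unfolding Cons y using True by simp
        show ?thesis
        proof (cases "?m = 0")
          case m0: True
          then have "\<sigma> l ^^ k \<circ> \<sigma> l ^^ k2 = id" using sm by simp
          then have "\<sigma> l ^^ k \<circ> weval r = weval r'" unfolding ew by (simp add: comp_assoc[symmetric])
          moreover have "push (l, k) r = r'" unfolding Cons y using True m0 push_same[OF kF] by simp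
          moreover have "es i r' mod p = (?c + es i r) mod p" using esm m0 True unfolding Cons y by simp
          ultimately show ?thesis using r'ok by simp
        next
          case m0: False
          have "rdw ((l, ?m) # r')"
          proof -
            have "adj_ok ((l, ?m) # r')" using assms(1) True unfolding Cons y rdw_def
              by (cases r') auto
            moreover have "0 < ?m" "?m < p" using m0 pp by auto
            ultimately show ?thesis using r'ok assms(2) unfolding rdw_def by auto
          qed
          moreover have "\<sigma> l ^^ k \<circ> weval r = \<sigma> l ^^ ?m \<circ> weval r'"
            unfolding ew using sm by (simp add: comp_assoc[symmetric])
          moreover have "push (l, k) r = (l, ?m) # r'" unfolding Cons y using True m0 push_same[OF kF] by simp
          moreover have "es i ((l, ?m) # r') mod p = (?c + es i r) mod p" using esm True unfolding Cons y by simp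
          ultimately show ?thesis by simp
        qed
      next
        case False
        have "rdw ((l, ?k) # r)" using assms kk False unfolding rdw_def Cons y by auto
        moreover have "push (l, k) r = (l, ?k) # r" unfolding Cons y using push_diff[OF kF False] by simp
        moreover have "es i ((l, ?k) # r) mod p = (?c + es i r) mod p" using ck[of "es i r"] by simp
        ultimately show ?thesis using sk by simp
      qed
    qed
  qed
qed

lemma red_props0: "okw w \<Longrightarrow> rdw (red w) \<and> weval (red w) = weval w \<and> es i (red w) mod p = es i w mod p"
proof (induction w)
  case Nil
  then show ?case by (simp add: rdw_def)
next
  case (Cons x w)
  obtain l k where x: "x = (l, k)" by (cases x)
  have ok: "okw w" "l \<le> s" using Cons.prems x unfolding okw_def by auto
  have IH: "rdw (red w)" "weval (red w) = weval w" "es i (red w) mod p = es i w mod p"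
    using Cons.IH ok by auto
  have "es i (red (x # w)) mod p = ((if l = i then k else 0) + es i (red w)) mod p"
    using push_props[OF IH(1) ok(2)] x by simp
  also have "\<dots> = ((if l = i then k else 0) + es i w) mod p" using IH(3) by (metis mod_add_right_eq)
  finally show ?case using x push_props[OF IH(1) ok(2)] IH(2) by simp
qed

lemma red_props: assumes "okw w"
  shows "rdw (red w)" "weval (red w) = weval w" "es i (red w) mod p = es i w mod p"
  using red_props0[OF assms] by auto

lemma inv_sig: assumes "l \<le> s" shows "inv (\<sigma> l) = \<sigma> l ^^ (p - 1)"
proof -
  have pp: "p = Suc (p - 1)" using p_ge2 by simp
  have sp: "\<sigma> l ^^ p = id" using sigma_in assms by blast
  have "\<sigma> l ^^ (p - 1) \<circ> \<sigma> l = id" using sp pp by (metis funpow_Suc_right)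
  moreover have "\<sigma> l \<circ> \<sigma> l ^^ (p - 1) = id" using sp pp by (metis funpow.simps(2))
  ultimately show ?thesis by (metis inv_unique_comp)
qed

lemma word_of: assumes "f \<in> mgen (\<sigma> ` {0..s})" shows "\<exists>w. okw w \<and> f = weval w"
  using assms
proof (induction f rule: mgen.induct)
  case gen_id then show ?case by (intro exI[of _ "[]"]) (simp add: okw_def id_def)
next
  case (gen_mul f g)
  then obtain w l where "okw w" "g = weval w" "l \<le> s" "f = \<sigma> l" by auto
  then show ?case by (intro exI[of _ "(l, 1) # w"]) (auto simp: okw_def)
next
  case (gen_inv f g)
  then obtain w l where "okw w" "g = weval w" "l \<le> s" "f = \<sigma> l" by auto
  then show ?case using inv_sig by (intro exI[of _ "(l, p - 1) # w"]) (auto simp: okw_def)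
qed

definition winv :: "(nat \<times> nat) list \<Rightarrow> (nat \<times> nat) list" where
  "winv w = rev (map (\<lambda>(l, k). (l, (p - 1) * k)) w)"

lemma winv_Cons[simp]: "winv ((l, k) # w) = winv w @ [(l, (p - 1) * k)]"
  by (simp add: winv_def)

lemma winv_props: "okw w \<Longrightarrow> okw (winv w) \<and> weval (winv w) \<circ> weval w = id \<and> es i (winv w) = (p - 1) * es i w"
proof (induction w)
  case Nil then show ?case by (simp add: winv_def okw_def)
next
  case (Cons x w)
  obtain l k where x: "x = (l, k)" by (cases x)
  have ok: "okw w" "l \<le> s" using Cons.prems x unfolding okw_def by auto
  have IH: "okw (winv w)" "weval (winv w) \<circ> weval w = id" "es i (winv w) = (p - 1) * es i w"
    using Cons.IH ok by blast+
  have pk: "(p - 1) * k + k = p * k" using p_ge2 by (simp add: algebra_simps)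
  have "\<sigma> l ^^ ((p - 1) * k) \<circ> \<sigma> l ^^ k = id"
  proof -
    have "\<sigma> l ^^ ((p - 1) * k) \<circ> \<sigma> l ^^ k = \<sigma> l ^^ (p * k)" using pk by (metis funpow_add)
    also have "\<dots> = (\<sigma> l ^^ p) ^^ k" by (simp only: funpow_mult)
    also have "\<dots> = id" using sigma_in ok(2) by simp
    finally show ?thesis .
  qed
  then have "weval (winv (x # w)) \<circ> weval (x # w) = weval (winv w) \<circ> weval w"
    using x by (simp add: weval_append comp_assoc) (metis comp_assoc comp_id)
  moreover have "okw (winv (x # w))" using IH(1) ok(2) x unfolding okw_def by auto
  moreover have "es i (winv (x # w)) = (p - 1) * es i (x # w)" using IH(3) x
    by (simp add: es_append algebra_simps)
  ultimately show ?case using IH(2) by metis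
qed

lemma main_words: assumes "\<gamma> \<in> \<Gamma>" "i \<le> s" "j \<le> s" "i \<noteq> j" "\<gamma> \<circ> \<sigma> i \<circ> inv \<gamma> = \<sigma> j"
  shows False
proof -
  have fp: "mgen (\<Gamma> \<union> {\<sigma> 0}) = mgen (\<sigma> ` {0..s})" using free_prod unfolding free_product_cyclic_def by blast
  have "\<gamma> \<in> mgen (\<sigma> ` {0..s})" using assms(1) fp mgen_gen[of \<gamma> "\<Gamma> \<union> {\<sigma> 0}"] by auto
  then obtain w where w: "okw w" "\<gamma> = weval w" using word_of by blast
  have wi: "okw (winv w)" "weval (winv w) \<circ> \<gamma> = id" "es i (winv w) = (p - 1) * es i w"
    using winv_props[OF w(1)] w(2) by auto
  have bg: "bij \<gamma>" using Gamma_bij assms(1) by blast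
  have ig: "inv \<gamma> = weval (winv w)"
  proof -
    have "weval (winv w) = weval (winv w) \<circ> \<gamma> \<circ> inv \<gamma>" using bg by (simp add: comp_assoc comp_inv_self)
    then show ?thesis using wi(2) by simp
  qed
  define W where "W = w @ [(i, 1)] @ winv w @ [(j, p - 1)]"
  have okW: "okw W" unfolding W_def using w(1) wi(1) assms(2,3) unfolding okw_def by auto
  have "weval W = \<gamma> \<circ> \<sigma> i \<circ> inv \<gamma> \<circ> \<sigma> j ^^ (p - 1)"
    unfolding W_def using w(2) ig by (simp add: weval_append comp_assoc)
  also have "\<dots> = \<sigma> j \<circ> inv (\<sigma> j)" using assms(5) inv_sig[OF assms(3)] by simp
  also have "\<dots> = id" using sigma_bij[OF assms(3)] by (simp add: comp_inv_self)
  finally have eW: "weval W = id" .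
  have "es i W = es i w + 1 + (p - 1) * es i w" unfolding W_def using wi(3) assms(4)
    by (simp add: es_append)
  also have "\<dots> = p * es i w + 1" using p_ge2
    by (simp add: algebra_simps)
  finally have eW1: "es i W = 1 + p * es i w" by simp
  have "(1 + p * es i w) mod p = 1 mod p" by (rule mod_mult_self2)
  then have "es i W mod p = 1" using p_ge2 eW1 by simp
  then have esr: "es i (red W) mod p = 1" using red_props(3)[OF okW] by simp
  have rr: "rdw (red W)" "weval (red W) = id" using red_props[OF okW] eW by auto
  have "red W = []"
  proof (rule ccontr)
    assume ne: "red W \<noteq> []"
    have "foldr (\<lambda>(i, k) f. (\<sigma> i ^^ k) \<circ> f) (red W) id \<noteq> id"
      using free_prod ne rr(1) unfolding free_product_cyclic_def rdw_def adj_ok_iff by blast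
    then show False using rr(2) unfolding weval_def by simp
  qed
  then show False using esr p_ge2 by simp
qed

end


context setting begin

lemma sig_inv_fix: "l \<le> s \<Longrightarrow> \<sigma> l y = y \<Longrightarrow> inv (\<sigma> l) y = y"
proof -
  assume a: "l \<le> s" "\<sigma> l y = y"
  have "inv (\<sigma> l) (\<sigma> l y) = y" using sigma_bij[OF a(1)] by (rule bij_inv_f_f)
  then show ?thesis using a(2) by simp
qed

lemma ofix_ord: "l \<le> s \<Longrightarrow> ofix l \<in> \<Omega>" using fixpts_ord unfolding ofix_def by blast
lemma efix_ord: "l \<le> s \<Longrightarrow> efix l \<in> \<Omega>" using fixpts_ord unfolding efix_def by blast

lemma fixpair: assumes "i \<le> s" "\<gamma> \<in> \<Gamma>" "x \<in> {ofix i, efix i}" "y \<in> {ofix i, efix i}" "\<gamma> x = y"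
  shows "\<gamma> = id"
proof -
  have bg: "bij \<gamma>" using Gamma_bij assms(2) by blast
  have bs: "bij (\<sigma> i)" using sigma_bij assms(1) by blast
  have fx: "\<sigma> i x = x" "\<sigma> i y = y" using assms(3,4) fix_o fix_e assms(1) by auto
  have xO: "x \<in> \<Omega>" "y \<in> \<Omega>" using assms(3,4) ofix_ord efix_ord assms(1) by auto
  define \<psi> where "\<psi> = \<gamma> \<circ> \<sigma> i \<circ> inv \<gamma> \<circ> inv (\<sigma> i)"
  have "\<psi> = \<gamma> \<circ> (\<sigma> i \<circ> inv \<gamma> \<circ> inv (\<sigma> i))" unfolding \<psi>_def by (simp add: comp_assoc)
  then have psiG: "\<psi> \<in> \<Gamma>" using conj_sigma(1)[OF assms(1) Gamma_inv[OF assms(2)]] assms(2) Gamma_comp by simp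
  have "inv \<gamma> y = x" unfolding assms(5)[symmetric] using bg by (rule bij_inv_f_f)
  then have "\<psi> y = y" unfolding \<psi>_def using sig_inv_fix[OF assms(1) fx(2)] fx(1) assms(5) by simp
  then have "\<psi> = id" using free_action[OF psiG xO(2)] by simp
  then have comm: "\<gamma> (\<sigma> i z) = \<sigma> i (\<gamma> z)" for z
  proof -
    have "\<psi> (\<sigma> i (\<gamma> z)) = \<sigma> i (\<gamma> z)" using \<open>\<psi> = id\<close> by simp
    then show ?thesis unfolding \<psi>_def using bs bg by simp
  qed
  have "\<sigma> i (\<gamma> y) = \<gamma> y" using comm fx by metis
  then have gy: "\<gamma> y = ofix i \<or> \<gamma> y = efix i" using fix_only assms(1) by blast
  show ?thesis
  proof (cases "x = y")
    case True then show ?thesis using free_action[OF assms(2) xO(1)] assms(5) by simp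
  next
    case False
    show ?thesis
    proof (cases "\<gamma> y = y")
      case True then show ?thesis using free_action[OF assms(2) xO(2)] by simp
    next
      case False
      then have "\<gamma> y = x" using gy assms(3,4) \<open>x \<noteq> y\<close> by auto
      then have "(\<gamma> \<circ> \<gamma>) x = x" using assms(5) by simp
      then have "\<gamma> \<circ> \<gamma> = id" using free_action[OF Gamma_comp[OF assms(2) assms(2)] xO(1)] by simp
      then have "\<gamma> ^^ 2 = id" by (simp add: numeral_2_eq_2)
      then show ?thesis using torsion[OF assms(2), of 2] by simp
    qed
  qed
qed

lemma no_hit: assumes "i \<le> s" "j \<le> s" "i \<noteq> j" "\<gamma> \<in> \<Gamma>" "x \<in> {ofix i, efix i}" "f \<in> {ofix j, efix j}"
  shows "\<gamma> x \<noteq> f"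
proof
  assume hit: "\<gamma> x = f"
  have bg: "bij \<gamma>" using Gamma_bij assms(4) by blast
  have bs: "bij (\<sigma> i)" "bij (\<sigma> j)" using sigma_bij assms(1,2) by auto
  have fx: "\<sigma> i x = x" "\<sigma> j f = f" using assms(5,6) fix_o fix_e assms(1,2) by auto
  have fO: "f \<in> \<Omega>" using assms(6) ofix_ord efix_ord assms(2) by auto
  define \<psi> where "\<psi> = \<gamma> \<circ> \<sigma> i \<circ> inv \<gamma> \<circ> inv (\<sigma> j)"
  have "\<psi> = \<gamma> \<circ> (\<sigma> i \<circ> inv \<gamma> \<circ> inv (\<sigma> i)) \<circ> (\<sigma> i \<circ> inv (\<sigma> j))" unfolding \<psi>_def
    using bs by (simp add: fun_eq_iff)
  then have psiG: "\<psi> \<in> \<Gamma>"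
    using conj_sigma(1)[OF assms(1) Gamma_inv[OF assms(4)]] assms(4) Gamma_comp part1[OF assms(1,2)] by simp
  have "inv \<gamma> f = x" unfolding hit[symmetric] using bg by (rule bij_inv_f_f)
  then have "\<psi> f = f" unfolding \<psi>_def using sig_inv_fix[OF assms(2) fx(2)] fx(1) hit by simp
  then have "\<psi> = id" using free_action[OF psiG fO] by simp
  then have "\<gamma> \<circ> \<sigma> i \<circ> inv \<gamma> = \<sigma> j"
  proof -
    have "\<psi> \<circ> \<sigma> j = \<sigma> j" using \<open>\<psi> = id\<close> by simp
    then show ?thesis unfolding \<psi>_def using bs by (simp add: fun_eq_iff)
  qed
  then show False using main_words assms by blast
qed

end


locale setij = setting +
  fixes i j :: nat
  assumes ij: "i \<le> s" "j \<le> s" "i \<noteq> j"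
begin

abbreviation "a \<equiv> ofix i"
abbreviation "b \<equiv> efix i"
abbreviation "Th \<equiv> Theta v \<Gamma> a b"

lemma aO: "a \<in> \<Omega>" and bO: "b \<in> \<Omega>" using ofix_ord efix_ord ij by auto

lemma Th_conv: assumes "Some z \<in> \<Omega>" shows "conv \<Gamma> (Pf a b z) (Th z)"
proof -
  obtain L where "conv \<Gamma> (Pf a b z) L" using theta_conv[OF aO bO assms] by blast
  then show ?thesis using Theta_eq by simp
qed

lemma Th_nz: assumes "Some z \<in> \<Omega>" "\<forall>\<gamma>\<in>\<Gamma>. \<gamma> a \<noteq> Some z \<and> \<gamma> b \<noteq> Some z" shows "Th z \<noteq> 0"
proof -
  obtain L where L: "conv \<Gamma> (Pf a b z) L" "L \<noteq> 0" using theta_conv[OF aO bO assms(1)] assms(2) by blast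
  then show ?thesis using Theta_eq by simp
qed

definition R where "R z = (THE L. conv (\<Gamma> - {id}) (Pf a b z) L)"

lemma R_conv: assumes "Some z \<in> \<Omega>" shows "conv (\<Gamma> - {id}) (Pf a b z) (R z)"
proof -
  obtain L where L: "conv (\<Gamma> - {id}) (Pf a b z) L" using theta_conv[OF aO bO assms, of "\<Gamma> - {id}"] by blast
  then have "R z = L" unfolding R_def using conv_unique by blast
  then show ?thesis using L by simp
qed

lemma R_nz: assumes "Some z \<in> \<Omega>" "\<forall>\<gamma>\<in>\<Gamma> - {id}. \<gamma> a \<noteq> Some z \<and> \<gamma> b \<noteq> Some z" shows "R z \<noteq> 0"
proof -
  obtain L where L: "conv (\<Gamma> - {id}) (Pf a b z) L" "L \<noteq> 0"
    using theta_conv[OF aO bO assms(1), of "\<Gamma> - {id}"] assms(2) by blast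
  then show ?thesis using R_conv[OF assms(1)] conv_unique by blast
qed

lemma Th_R: assumes "Some z \<in> \<Omega>" shows "Th z = theta_fac z a b * R z"
proof -
  have "conv \<Gamma> (Pf a b z) (theta_fac z a b * R z)"
  proof (rule conv_insert[of \<Gamma> id])
    show "conv (\<Gamma> - {id}) (Pf a b z) (R z)" by (rule R_conv[OF assms])
    show "id \<in> \<Gamma>" by simp
    fix F assume "finite F" "id \<in> F" "F \<subseteq> \<Gamma>"
    then show "Pf a b z F = theta_fac z a b * Pf a b z (F - {id})"
      unfolding Pf_def by (simp add: prod.remove)
  qed
  then show ?thesis using Theta_eq by simp
qed

lemma Sm_i: "mdet (Sm i) \<noteq> 0" "\<sigma> i = mo (Sm i)" using Sm_det sigma_mo ij by auto

lemma bij_si: "bij (\<sigma> i)" and bij_sj: "bij (\<sigma> j)" using sigma_bij ij by auto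

lemma ord_si: "x \<in> \<Omega> \<Longrightarrow> \<sigma> i x \<in> \<Omega>"
  using ord_inv[OF Sm_i(1)] conj_sigma(2)[OF ij(1)] Sm_i(2) by metis

lemma ord_sj_inv: assumes "x \<in> \<Omega>" shows "inv (\<sigma> j) x \<in> \<Omega>"
proof -
  have d: "mdet (madj (Sm j)) \<noteq> 0" using Sm_det ij by simp
  have e: "inv (\<sigma> j) = mo (madj (Sm j))" using sigma_mo mo_inv Sm_det ij by metis
  have "inv (mo (madj (Sm j))) = \<sigma> j" using e bij_sj by (metis inv_inv_eq)
  then have "inv (mo (madj (Sm j))) \<circ> \<gamma> \<circ> mo (madj (Sm j)) \<in> \<Gamma>" if "\<gamma> \<in> \<Gamma>" for \<gamma>
    using conj_sigma(1)[OF ij(2) that] e by simp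
  then show ?thesis using ord_inv[OF d _ assms] e by simp
qed

lemma ab_fix: "\<sigma> i a = a" "\<sigma> i b = b" "inv (\<sigma> i) a = a" "inv (\<sigma> i) b = b"
  using fix_o fix_e sig_inv_fix ij by auto

lemma a_ne_b: "a \<noteq> b" using o_ne_e ij by blast

lemma S4: assumes "Some z \<in> \<Omega>" "\<sigma> i (Some z) = Some w" shows "Th w = \<zeta> powi \<nu> i * Th z"
proof -
  define \<phi> where "\<phi> \<gamma> = \<sigma> i \<circ> \<gamma> \<circ> inv (\<sigma> i)" for \<gamma>
  define \<psi> where "\<psi> \<gamma> = inv (\<sigma> i) \<circ> \<gamma> \<circ> \<sigma> i" for \<gamma>
  have pp: "\<psi> (\<phi> \<gamma>) = \<gamma>" "\<phi> (\<psi> \<gamma>) = \<gamma>" for \<gamma> unfolding \<phi>_def \<psi>_def using bij_si by (simp_all add: fun_eq_iff)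
  have bb: "bij_betw \<phi> (\<Gamma> - {id}) (\<Gamma> - {id})"
  proof (rule bij_betw_byWitness[where f' = \<psi>])
    show "\<forall>x\<in>\<Gamma> - {id}. \<psi> (\<phi> x) = x" "\<forall>x\<in>\<Gamma> - {id}. \<phi> (\<psi> x) = x" using pp by auto
    have "\<phi> id = id" "\<psi> id = id" unfolding \<phi>_def \<psi>_def using bij_si by (simp_all add: fun_eq_iff)
    then show "\<phi> ` (\<Gamma> - {id}) \<subseteq> \<Gamma> - {id}" "\<psi> ` (\<Gamma> - {id}) \<subseteq> \<Gamma> - {id}"
      using conj_sigma[OF ij(1)] pp unfolding \<phi>_def \<psi>_def by (auto, metis pp, metis pp)
  qed
  have ab: "mo (Sm i) (\<gamma> a) = \<phi> \<gamma> a \<and> mo (Sm i) (\<gamma> b) = \<phi> \<gamma> b" for \<gamma>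
    unfolding \<phi>_def Sm_i(2)[symmetric] using ab_fix by simp
  obtain c0 where c0: "Some c0 \<in> {a, b}"
    using a_ne_b by (cases a; cases b) auto
  have c0O: "Some c0 \<in> \<Omega>" using c0 aO bO by auto
  have c0f: "mo (Sm i) (Some c0) = Some c0" using c0 ab_fix Sm_i(2) by auto
  have Rc: "R c0 \<noteq> 0"
  proof (rule R_nz[OF c0O], intro ballI conjI)
    fix \<gamma> assume g: "\<gamma> \<in> \<Gamma> - {id}"
    show "\<gamma> a \<noteq> Some c0" using fixpair[OF ij(1), of \<gamma> a "Some c0"] g c0 by auto
    show "\<gamma> b \<noteq> Some c0" using fixpair[OF ij(1), of \<gamma> b "Some c0"] g c0 by auto
  qed
  have wO: "Some w \<in> \<Omega>" using ord_si[OF assms(1)] assms(2) by simp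
  have Rw: "R w = R z * (R c0 / R c0)"
    by (rule funeq[OF Sm_i(1) bb _ c0f R_conv[OF c0O] R_conv[OF c0O] Rc _ R_conv[OF assms(1)] R_conv[OF wO]])
      (use ab assms(2) Sm_i(2) in auto)
  then have Rw': "R w = R z" using Rc by simp
  have "theta_fac w a b = theta_fac w (mo (Sm i) a) (mo (Sm i) b)" using ab_fix Sm_i(2) by simp
  also have "\<dots> = (kap (Sm i) a / kap (Sm i) b) * theta_fac z a b"
    using tf_mo[OF Sm_i(1)] assms(2) Sm_i(2) by simp
  also have "\<dots> = \<zeta> powi \<nu> i * theta_fac z a b" using kap_ratio ij by simp
  finally show ?thesis using Th_R[OF wO] Th_R[OF assms(1)] Rw' by simp
qed

lemma f_exists: "\<exists>f0. Some f0 \<in> {ofix j, efix j}"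
  using o_ne_e[OF ij(2)] by (cases "ofix j"; cases "efix j") auto

lemma no_hit': assumes "Some f0 \<in> {ofix j, efix j}" "\<gamma> \<in> \<Gamma>" shows "\<gamma> a \<noteq> Some f0 \<and> \<gamma> b \<noteq> Some f0"
  using no_hit[OF ij assms(2), of _ "Some f0"] assms(1) by auto

lemma S5: assumes "Some z \<in> \<Omega>" "inv (\<sigma> j) (Some z) = Some w" shows "Th w = Th z"
proof -
  let ?N = "madj (Sm j)"
  have dN: "mdet ?N \<noteq> 0" using Sm_det ij by simp
  have eN: "inv (\<sigma> j) = mo ?N" using sigma_mo mo_inv Sm_det ij by metis
  define g2 where "g2 = inv (\<sigma> j) \<circ> \<sigma> i"
  have "g2 = inv (\<sigma> j) \<circ> (\<sigma> i \<circ> inv (\<sigma> j)) \<circ> \<sigma> j" unfolding g2_def using bij_sj by (simp add: fun_eq_iff)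
  then have g2G: "g2 \<in> \<Gamma>" using conj_sigma(2)[OF ij(2) part1[OF ij(1,2)]] by simp
  have bg2: "bij g2" using Gamma_bij g2G by blast
  define \<phi> where "\<phi> \<gamma> = inv (\<sigma> j) \<circ> \<gamma> \<circ> \<sigma> j \<circ> g2" for \<gamma>
  define \<psi> where "\<psi> \<gamma> = \<sigma> j \<circ> (\<gamma> \<circ> inv g2) \<circ> inv (\<sigma> j)" for \<gamma>
  have pp: "\<psi> (\<phi> \<gamma>) = \<gamma>" "\<phi> (\<psi> \<gamma>) = \<gamma>" for \<gamma> unfolding \<phi>_def \<psi>_def using bij_sj bg2
    by (simp_all add: fun_eq_iff)
  have phiG: "\<phi> \<gamma> \<in> \<Gamma>" if "\<gamma> \<in> \<Gamma>" for \<gamma>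
    unfolding \<phi>_def using Gamma_comp[OF conj_sigma(2)[OF ij(2) that] g2G] .
  have psiG: "\<psi> \<gamma> \<in> \<Gamma>" if "\<gamma> \<in> \<Gamma>" for \<gamma>
    unfolding \<psi>_def using conj_sigma(1)[OF ij(2) Gamma_comp[OF that Gamma_inv[OF g2G]]] .
  have bb: "bij_betw \<phi> \<Gamma> \<Gamma>"
    by (rule bij_betw_byWitness[where f' = \<psi>]) (use pp phiG psiG in auto)
  have ab: "mo ?N (\<gamma> a) = \<phi> \<gamma> a \<and> mo ?N (\<gamma> b) = \<phi> \<gamma> b" for \<gamma>
    unfolding \<phi>_def g2_def eN[symmetric] using ab_fix bij_sj by simp
  obtain f0 where f0: "Some f0 \<in> {ofix j, efix j}" using f_exists by blast
  have f0O: "Some f0 \<in> \<Omega>" using f0 ofix_ord efix_ord ij by auto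
  have f0f: "mo ?N (Some f0) = Some f0" using f0 sig_inv_fix[OF ij(2)] fix_o fix_e ij eN by auto
  have Tf: "Th f0 \<noteq> 0" using Th_nz[OF f0O] no_hit'[OF f0] by blast
  have wO: "Some w \<in> \<Omega>" using ord_sj_inv[OF assms(1)] assms(2) by simp
  have "Th w = Th z * (Th f0 / Th f0)"
    by (rule funeq[OF dN bb _ f0f Th_conv[OF f0O] Th_conv[OF f0O] Tf _ Th_conv[OF assms(1)] Th_conv[OF wO]])
      (use ab assms(2) eN in auto)
  then show ?thesis using Tf by simp
qed

abbreviation "gg \<equiv> \<sigma> i \<circ> inv (\<sigma> j)"

lemma ggG: "gg \<in> \<Gamma>" using part1 ij by blast

lemma bij_gg: "bij gg" using Gamma_bij ggG by blast

lemma gg_ne_id: "gg \<noteq> id"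
proof
  assume e: "gg = id"
  have sij: "\<sigma> i x = \<sigma> j x" for x
  proof -
    have "gg (\<sigma> j x) = \<sigma> j x" using e by simp
    then show ?thesis using bij_sj by simp
  qed
  obtain f0 where f0: "Some f0 \<in> {ofix j, efix j}" using f_exists by blast
  have "\<sigma> j (Some f0) = Some f0" using f0 fix_o fix_e ij by auto
  then have "\<sigma> i (Some f0) = Some f0" using sij by simp
  then have "Some f0 = a \<or> Some f0 = b" using fix_only ij by metis
  then show False using no_hit'[OF f0 Gamma_id] by auto
qed

lemma z0_exists: "\<exists>q0 y0 w0. Some q0 \<in> \<Omega> \<and> inv (\<sigma> j) (Some q0) = Some y0 \<and> gg (Some q0) = Some w0 \<and> Th q0 \<noteq> 0"
proof -
  obtain f0 where f0: "Some f0 \<in> {ofix j, efix j}" using f_exists by blast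
  have f0O: "Some f0 \<in> \<Omega>" using f0 ofix_ord efix_ord ij by auto
  define qf where "qf n = (gg ^^ n) (Some f0)" for n
  have qfO: "qf n \<in> \<Omega>" for n unfolding qf_def using ord_Gamma[OF Gamma_pow[OF ggG] f0O] .
  have bp: "bij (gg ^^ n)" for n using Gamma_bij[OF Gamma_pow[OF ggG]] .
  have inj: "inj_on qf {0..<4}"
  proof (rule inj_onI)
    fix m n assume mn: "m \<in> {0..<4}" "n \<in> {0..<4}" "qf m = qf n"
    show "m = n"
    proof (rule ccontr)
      assume "m \<noteq> n"
      have key: "False" if lt: "m' < n'" and eq: "qf m' = qf n'" for m' n'
      proof -
        have "gg ^^ n' = gg ^^ (n' - m') \<circ> gg ^^ m'" using lt
          by (metis funpow_add le_add_diff_inverse2 less_imp_le)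
        then have "(gg ^^ (n' - m')) (qf m') = qf n'" unfolding qf_def by simp
        then have "(gg ^^ (n' - m')) (qf m') = qf m'" using eq by simp
        then have "gg ^^ (n' - m') = id" by (rule free_action[OF Gamma_pow[OF ggG] qfO])
        then show False using torsion[OF ggG, of "n' - m'"] gg_ne_id lt by simp
      qed
      show False using key[of m n] key[of n m] mn \<open>m \<noteq> n\<close> by (metis linorder_neqE_nat)
    qed
  qed
  let ?B = "{None, \<sigma> j None, inv gg None}"
  have "card (qf ` {0..<4}) = 4" using card_image[OF inj] by simp
  moreover have "card ?B \<le> 3"
  proof -
    have "?B = set [None, \<sigma> j None, inv gg None]" by simp
    then show ?thesis using card_length[of "[None, \<sigma> j None, inv gg None]"] by simp
  qed
  ultimately have "\<not> qf ` {0..<4} \<subseteq> ?B"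
    using card_mono[of ?B "qf ` {0..<4}"] by auto
  then obtain n where n: "qf n \<notin> ?B" by (meson image_subset_iff)
  then obtain q0 where q0: "qf n = Some q0" by (cases "qf n") auto
  have "inv (\<sigma> j) (Some q0) \<noteq> None"
  proof
    assume "inv (\<sigma> j) (Some q0) = None"
    then have "Some q0 = \<sigma> j None" using bij_f_inv_f[OF bij_sj, of "Some q0"] by simp
    then show False using n q0 by simp
  qed
  then obtain y0 where y0: "inv (\<sigma> j) (Some q0) = Some y0" by blast
  have "gg (Some q0) \<noteq> None"
  proof
    assume "gg (Some q0) = None"
    then have "Some q0 = inv gg None" using bij_inv_f_f[OF bij_gg, of "Some q0"] by simp
    then show False using n q0 by simp
  qed
  then obtain w0 where w0: "gg (Some q0) = Some w0" by blast
  have bk: "inv (gg ^^ n) (Some q0) = Some f0" unfolding q0[symmetric] qf_def using bp by simp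
  have nh: "\<gamma> a \<noteq> Some q0 \<and> \<gamma> b \<noteq> Some q0" if gG: "\<gamma> \<in> \<Gamma>" for \<gamma>
  proof -
    have hG: "inv (gg ^^ n) \<circ> \<gamma> \<in> \<Gamma>" using Gamma_comp[OF Gamma_inv[OF Gamma_pow[OF ggG]] gG] .
    have "(inv (gg ^^ n) \<circ> \<gamma>) a \<noteq> Some f0" "(inv (gg ^^ n) \<circ> \<gamma>) b \<noteq> Some f0"
      using no_hit'[OF f0 hG] by auto
    then show ?thesis using bk by auto
  qed
  have "Th q0 \<noteq> 0" using Th_nz[of q0] qfO[of n] q0 nh by simp
  then show ?thesis using qfO[of n] q0 y0 w0 by auto
qed

lemma S6: assumes "Some z \<in> \<Omega>" "gg (Some z) = Some w" shows "Th w = \<zeta> powi \<nu> i * Th z"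
proof -
  obtain q0 y0 w0 where q: "Some q0 \<in> \<Omega>" "inv (\<sigma> j) (Some q0) = Some y0" "gg (Some q0) = Some w0" "Th q0 \<noteq> 0"
    using z0_exists by blast
  let ?M = "nm gg"
  have M: "mdet ?M \<noteq> 0" "gg = mo ?M" using nm[OF ggG] by auto
  define \<phi> where "\<phi> \<gamma> = gg \<circ> \<gamma>" for \<gamma> :: "'a option \<Rightarrow> 'a option"
  define \<psi> where "\<psi> \<gamma> = inv gg \<circ> \<gamma>" for \<gamma> :: "'a option \<Rightarrow> 'a option"
  have g1: "inv gg (\<sigma> i (inv (\<sigma> j) x)) = x" for x using bij_inv_f_f[OF bij_gg, of x] by simp
  have g2: "\<sigma> i (inv (\<sigma> j) (inv gg x)) = x" for x using bij_f_inv_f[OF bij_gg, of x] by simp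
  have pp: "\<psi> (\<phi> \<gamma>) = \<gamma>" "\<phi> (\<psi> \<gamma>) = \<gamma>" for \<gamma> unfolding \<phi>_def \<psi>_def
    by (simp_all add: fun_eq_iff g1 g2)
  have bb: "bij_betw \<phi> \<Gamma> \<Gamma>"
    by (rule bij_betw_byWitness[where f' = \<psi>])
      (use pp Gamma_comp ggG Gamma_inv in \<open>auto simp: \<phi>_def \<psi>_def\<close>)
  have ab: "mo ?M (\<gamma> a) = \<phi> \<gamma> a \<and> mo ?M (\<gamma> b) = \<phi> \<gamma> b" for \<gamma>
    unfolding \<phi>_def M(2)[symmetric] by simp
  have w0O: "Some w0 \<in> \<Omega>" using ord_Gamma[OF ggG q(1)] q(3) by simp
  have y0O: "Some y0 \<in> \<Omega>" using ord_sj_inv[OF q(1)] q(2) by simp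
  have wO: "Some w \<in> \<Omega>" using ord_Gamma[OF ggG assms(1)] assms(2) by simp
  have "\<sigma> i (Some y0) = Some w0" using q(2,3) by (metis comp_apply)
  then have "Th w0 = \<zeta> powi \<nu> i * Th y0" using S4[OF y0O] by blast
  also have "Th y0 = Th q0" using S5[OF q(1,2)] .
  finally have Tw0: "Th w0 = \<zeta> powi \<nu> i * Th q0" .
  have "Th w = Th z * (Th w0 / Th q0)"
    by (rule funeq[OF M(1) bb _ _ Th_conv[OF q(1)] Th_conv[OF w0O] q(4) _ Th_conv[OF assms(1)] Th_conv[OF wO]])
      (use ab q(3) assms(2) M(2) in auto)
  then show ?thesis using Tw0 q(4) by simp
qed

theorem final: "gg \<in> \<Gamma> \<and> autfac v \<Gamma> (inv (\<upsilon> i) (Some 0)) (inv (\<upsilon> i) None) gg = \<zeta> powi \<nu> i"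
proof
  show "gg \<in> \<Gamma>" by (rule ggG)
  obtain q0 y0 w0 where q: "Some q0 \<in> \<Omega>" "inv (\<sigma> j) (Some q0) = Some y0" "gg (Some q0) = Some w0" "Th q0 \<noteq> 0"
    using z0_exists by blast
  have "autfac v \<Gamma> a b gg = \<zeta> powi \<nu> i"
    unfolding autfac_def
  proof (rule the_equality)
    show "\<forall>z w. Some z \<in> \<Omega> \<and> gg (Some z) = Some w \<longrightarrow> Th w = \<zeta> powi \<nu> i * Th z"
      using S6 by blast
    fix c assume c: "\<forall>z w. Some z \<in> \<Omega> \<and> gg (Some z) = Some w \<longrightarrow> Th w = c * Th z"
    have "Th w0 = c * Th q0" using c q by blast
    moreover have "Th w0 = \<zeta> powi \<nu> i * Th q0" using S6 q by blast
    ultimately show "c = \<zeta> powi \<nu> i" using q(4) by simp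
  qed
  then show "autfac v \<Gamma> (inv (\<upsilon> i) (Some 0)) (inv (\<upsilon> i) None) gg = \<zeta> powi \<nu> i"
    unfolding ofix_def efix_def .
qed

end


theorem mainTheorem7:
  fixes v :: "'k::field_char_0 \<Rightarrow> real" and p :: nat and \<zeta> :: 'k
    and \<Gamma> :: "('k option \<Rightarrow> 'k option) set" and g s :: nat
    and \<sigma> \<upsilon> :: "nat \<Rightarrow> 'k option \<Rightarrow> 'k option" and \<nu> :: "nat \<Rightarrow> int"
    and i j :: nat
  assumes field: "complete_nonarch_acf v"
    and p_prime: "prime p"
    and zeta_root: "\<zeta> ^ p = 1" and zeta_prim: "\<forall>k. 0 < k \<and> k < p \<longrightarrow> \<zeta> ^ k \<noteq> 1"
    and schottky: "schottky v \<Gamma> g"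
    and inf_ord: "None \<in> ordinary v \<Gamma>"
    and sigma0_norm: "\<sigma> 0 \<in> normalizer \<Gamma>"
    and sigma0_p: "\<sigma> 0 ^^ p = id"
    and sigma0_prod: "\<forall>\<gamma>\<in>\<Gamma>. foldr (\<circ>) (map (\<lambda>k. (\<sigma> 0 ^^ k) \<circ> \<gamma> \<circ> inv (\<sigma> 0 ^^ k)) [0..<p]) id
                         \<in> commutator_subgroup \<Gamma>"
    and sigma_in: "\<forall>l\<le>s. \<sigma> l \<in> mgen (\<Gamma> \<union> {\<sigma> 0}) \<and> \<sigma> l ^^ p = id \<and> \<sigma> l \<noteq> id"
    and free_prod: "free_product_cyclic p (mgen (\<Gamma> \<union> {\<sigma> 0})) \<sigma> s"
    and xi_basis: "free_basis \<Gamma> (\<lambda>(l, k). xi \<sigma> l k) ({1..s} \<times> {1..p - 1})"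
    and sigma_diag: "\<forall>l\<le>s. \<upsilon> l \<in> PGL2 \<and> \<sigma> l = inv (\<upsilon> l) \<circ> moeb (\<zeta> powi \<nu> l) 0 0 1 \<circ> \<upsilon> l"
    and fixpts_ord: "\<forall>l\<le>s. inv (\<upsilon> l) (Some 0) \<in> ordinary v \<Gamma> \<and> inv (\<upsilon> l) None \<in> ordinary v \<Gamma>"
    and ij: "i \<le> s" "j \<le> s" "i \<noteq> j"
  shows "\<sigma> i \<circ> inv (\<sigma> j) \<in> \<Gamma> \<and>
         autfac v \<Gamma> (inv (\<upsilon> i) (Some 0)) (inv (\<upsilon> i) None) (\<sigma> i \<circ> inv (\<sigma> j)) = \<zeta> powi \<nu> i"
  proof -
  interpret setij v p \<zeta> \<Gamma> g s \<sigma> \<upsilon> \<nu> i j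
    by (unfold_locales) (use assms in auto)
  show ?thesis using final .
qed

end
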